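(* Let $r>2$, $\alpha=2^r-1$, $\beta=2^{r-1}(2^r-1)$, let $\mathcal{C}\subseteq\mathbb{Z}_2^\alpha\times\mathbb{Z}_4^\beta$ be a $\mathbb{Z}_2\mathbb{Z}_4$-additive 1-perfect code and $D=\mathcal{C}^\perp$, and suppose $D$ is $\mathbb{Z}_2\mathbb{Z}_4$-cyclic. Let $\mathbf{z}=(x_1,\dots,x_\alpha\mid y^{(1)},\dots,y^{(2^{r-1})})\in D$ be a codeword of order 4, where each $y^{(i)}=(y^{(i)}_1,\dots,y^{(i)}_\alpha)\in\mathbb{Z}_4^\alpha$ is the $i$th consecutive block of $\alpha$ quaternary coordinates. For distinct $i,j\in\{1,\dots,2^{r-1}\}$ let $N_{i,j}=\{\ell: 1\le\ell\le\alpha,\ y^{(i)}_\ell,y^{(j)}_\ell\in\{0,2\},\ y^{(i)}_\ell\neq y^{(j)}_\ell\}$. Then $|N_{i,j}|$ is even.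
   Context: A $\mathbb{Z}_2\mathbb{Z}_4$-additive code is an additive subgroup of $\mathbb{Z}_2^\alpha\times\mathbb{Z}_4^\beta$; vectors are $(u\mid u')$ with $u\in\mathbb{Z}_2^\alpha$, $u'\in\mathbb{Z}_4^\beta$. A codeword $\mathbf{z}$ has order 4 if $2\mathbf{z}\ne 0$. The Gray map $\phi:\mathbb{Z}_4\to\mathbb{Z}_2^2$ is $0\mapsto(0,0),1\mapsto(0,1),2\mapsto(1,1),3\mapsto(1,0)$, $\Phi(u\mid u')=(u\mid\phi(u'_1),\dots,\phi(u'_\beta))$. A binary code $C\subseteq\mathbb{Z}_2^n$ is 1-perfect if the Hamming balls of radius 1 around its codewords partition $\mathbb{Z}_2^n$; a $\mathbb{Z}_2\mathbb{Z}_4$-additive code is 1-perfect if its Gray image is. The dual is $\mathcal{C}^\perp=\{\mathbf{v}:\mathbf{u}\cdot\mathbf{v}=0\ \forall\mathbf{u}\in\mathcal{C}\}$ with $\mathbf{u}\cdot\mathbf{v}=2\sum_{i=1}^\alpha u_iv_i+\sum_{j=1}^\beta u'_jv'_j\in\mathbb{Z}_4$. With $\sigma(v_1,\dots,v_m)=(v_m,v_1,\dots,v_{m-1})$ and $\sigma(u\mid u')=(\sigma(u)\mid\sigma(u'))$, a code is $\mathbb{Z}_2\mathbb{Z}_4$-cyclic if closed under $\sigma$. *)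

theory Defs
  imports Main "HOL-Library.Numeral_Type"
begin

text \<open>Vectors of Z2^a x Z4^b: pairs of functions (0-indexed coordinates),
  required to vanish outside the index ranges.\<close>

type_synonym z2z4vec = "(nat \<Rightarrow> 2) \<times> (nat \<Rightarrow> 4)"

definition ambient :: "nat \<Rightarrow> nat \<Rightarrow> z2z4vec set" where
  "ambient a b = {(u, u'). (\<forall>i\<ge>a. u i = 0) \<and> (\<forall>j\<ge>b. u' j = 0)}"

definition vadd :: "z2z4vec \<Rightarrow> z2z4vec \<Rightarrow> z2z4vec" where
  "vadd x y = ((\<lambda>i. fst x i + fst y i), (\<lambda>j. snd x j + snd y j))"

definition vneg :: "z2z4vec \<Rightarrow> z2z4vec" where
  "vneg x = ((\<lambda>i. - fst x i), (\<lambda>j. - snd x j))"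

definition vzero :: z2z4vec where
  "vzero = ((\<lambda>_. 0), (\<lambda>_. 0))"

definition additive_code :: "nat \<Rightarrow> nat \<Rightarrow> z2z4vec set \<Rightarrow> bool" where
  "additive_code a b C \<longleftrightarrow> C \<subseteq> ambient a b \<and> vzero \<in> C \<and>
     (\<forall>x\<in>C. \<forall>y\<in>C. vadd x y \<in> C) \<and> (\<forall>x\<in>C. vneg x \<in> C)"

definition gray :: "4 \<Rightarrow> 2 \<times> 2" where
  "gray x = (if x = 0 then (0, 0) else if x = 1 then (0, 1)
             else if x = 2 then (1, 1) else (1, 0))"

definition Gray :: "nat \<Rightarrow> nat \<Rightarrow> z2z4vec \<Rightarrow> (nat \<Rightarrow> 2)" where
  "Gray a b v = (\<lambda>i. if i < a then fst v i
      else if i < a + 2 * b then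
        (if (i - a) mod 2 = 0 then fst (gray (snd v ((i - a) div 2)))
         else snd (gray (snd v ((i - a) div 2))))
      else 0)"

definition bin_space :: "nat \<Rightarrow> (nat \<Rightarrow> 2) set" where
  "bin_space n = {v. \<forall>i\<ge>n. v i = 0}"

definition hamming :: "nat \<Rightarrow> (nat \<Rightarrow> 2) \<Rightarrow> (nat \<Rightarrow> 2) \<Rightarrow> nat" where
  "hamming n v w = card {i. i < n \<and> v i \<noteq> w i}"

definition one_perfect_bin :: "nat \<Rightarrow> (nat \<Rightarrow> 2) set \<Rightarrow> bool" where
  "one_perfect_bin n C \<longleftrightarrow> C \<subseteq> bin_space n \<and>
     (\<forall>v\<in>bin_space n. \<exists>!c. c \<in> C \<and> hamming n v c \<le> 1)"

definition one_perfect_z2z4 :: "nat \<Rightarrow> nat \<Rightarrow> z2z4vec set \<Rightarrow> bool" where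
  "one_perfect_z2z4 a b C \<longleftrightarrow> one_perfect_bin (a + 2 * b) (Gray a b ` C)"

definition z2_to_z4 :: "2 \<Rightarrow> 4" where
  "z2_to_z4 x = (if x = 0 then 0 else 1)"

definition inner_z2z4 :: "nat \<Rightarrow> nat \<Rightarrow> z2z4vec \<Rightarrow> z2z4vec \<Rightarrow> 4" where
  "inner_z2z4 a b x y =
     2 * (\<Sum>i<a. z2_to_z4 (fst x i * fst y i)) + (\<Sum>j<b. snd x j * snd y j)"

definition dual_code :: "nat \<Rightarrow> nat \<Rightarrow> z2z4vec set \<Rightarrow> z2z4vec set" where
  "dual_code a b C = {v \<in> ambient a b. \<forall>u\<in>C. inner_z2z4 a b u v = 0}"

definition cshift :: "nat \<Rightarrow> (nat \<Rightarrow> 'a::zero) \<Rightarrow> (nat \<Rightarrow> 'a)" where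
  "cshift m v = (\<lambda>i. if i < m then v ((i + m - 1) mod m) else 0)"

definition vshift :: "nat \<Rightarrow> nat \<Rightarrow> z2z4vec \<Rightarrow> z2z4vec" where
  "vshift a b x = (cshift a (fst x), cshift b (snd x))"

definition cyclic_code :: "nat \<Rightarrow> nat \<Rightarrow> z2z4vec set \<Rightarrow> bool" where
  "cyclic_code a b C \<longleftrightarrow> (\<forall>x\<in>C. vshift a b x \<in> C)"

definition order4 :: "z2z4vec \<Rightarrow> bool" where
  "order4 z \<longleftrightarrow> vadd z z \<noteq> vzero"

end

theory Submission
  imports Defs "HOL-Library.Function_Algebras" "HOL-Library.Product_Plus"
begin

lemma ex4: "(x::4) = 0 \<or> x = 1 \<or> x = 2 \<or> x = 3"
proof (induct x)
  case (of_int z)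
  then have "z = 0 \<or> z = 1 \<or> z = 2 \<or> z = 3" by auto
  then show ?case by auto
qed

lemma ex2: "(x::2) = 0 \<or> x = 1"
proof (induct x)
  case (of_int z)
  then have "z = 0 \<or> z = 1" by auto
  then show ?case by auto
qed

lemma vadd_eq: "vadd x y = x + y" by (simp add: vadd_def plus_prod_def plus_fun_def)
lemma vneg_eq: "vneg x = - x" by (simp add: vneg_def uminus_prod_def fun_Compl_def)
lemma vzero_eq: "vzero = 0" by (simp add: vzero_def zero_prod_def zero_fun_def)

definition sg :: "'a::ab_group_add set \<Rightarrow> bool" where
  "sg S \<longleftrightarrow> 0 \<in> S \<and> (\<forall>a\<in>S. \<forall>b\<in>S. a + b \<in> S) \<and> (\<forall>a\<in>S. - a \<in> S)"

lemma sgD: assumes "sg S"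
  shows "0 \<in> S" "a \<in> S \<Longrightarrow> b \<in> S \<Longrightarrow> a + b \<in> S" "a \<in> S \<Longrightarrow> - a \<in> S"
    "a \<in> S \<Longrightarrow> b \<in> S \<Longrightarrow> a - b \<in> S"
proof -
  show "0 \<in> S" using assms unfolding sg_def by blast
  show "a \<in> S \<Longrightarrow> b \<in> S \<Longrightarrow> a + b \<in> S" using assms unfolding sg_def by blast
  show "a \<in> S \<Longrightarrow> - a \<in> S" using assms unfolding sg_def by blast
  show "a \<in> S \<Longrightarrow> b \<in> S \<Longrightarrow> a - b \<in> S" using assms unfolding sg_def
    by (metis diff_conv_add_uminus)
qed

lemma ambient_iff: "v \<in> ambient a b \<longleftrightarrow> (\<forall>i\<ge>a. fst v i = 0) \<and> (\<forall>j\<ge>b. snd v j = 0)"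
  by (cases v) (simp add: ambient_def)

lemma sg_ambient: "sg (ambient a b)"
  unfolding sg_def ambient_def by (auto simp: zero_prod_def)

lemma code_sg: assumes "additive_code a b C" shows "sg C" "C \<subseteq> ambient a b"
  using assms unfolding additive_code_def sg_def by (auto simp: vadd_eq vneg_eq vzero_eq)

lemma finite_funs: "finite {u :: nat \<Rightarrow> 'b::{finite,zero}. \<forall>i\<ge>n. u i = 0}"
proof -
  have sub: "{u :: nat \<Rightarrow> 'b. \<forall>i\<ge>n. u i = 0} \<subseteq> (\<lambda>xs i. if i < n then xs ! i else 0) ` {xs. set xs \<subseteq> UNIV \<and> length xs = n}"
  proof
    fix u :: "nat \<Rightarrow> 'b" assume "u \<in> {u. \<forall>i\<ge>n. u i = 0}"
    then have "u = (\<lambda>i. if i < n then map u [0..<n] ! i else 0)" by (auto simp: fun_eq_iff)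
    then show "u \<in> (\<lambda>xs i. if i < n then xs ! i else 0) ` {xs. set xs \<subseteq> UNIV \<and> length xs = n}"
      by (intro image_eqI[where x="map u [0..<n]"]) auto
  qed
  have fin: "finite {xs :: 'b list. set xs \<subseteq> UNIV \<and> length xs = n}"
    by (rule finite_lists_length_eq) simp
  show ?thesis by (rule finite_surj[OF fin sub])
qed

lemma finite_ambient: "finite (ambient a b)"
proof -
  have "ambient a b \<subseteq> {u :: nat \<Rightarrow> 2. \<forall>i\<ge>a. u i = 0} \<times> {u :: nat \<Rightarrow> 4. \<forall>i\<ge>b. u i = 0}"
    by (auto simp: ambient_iff)
  moreover have "finite ({u :: nat \<Rightarrow> 2. \<forall>i\<ge>a. u i = 0} \<times> {u :: nat \<Rightarrow> 4. \<forall>i\<ge>b. u i = 0})"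
    by (intro finite_cartesian_product finite_funs)
  ultimately show ?thesis by (rule finite_subset)
qed

definition eb :: "nat \<Rightarrow> z2z4vec" where "eb s = ((\<lambda>i. if i = s then 1 else 0), (\<lambda>_. 0))"
definition eqv :: "nat \<Rightarrow> z2z4vec" where "eqv t = ((\<lambda>_. 0), (\<lambda>j. if j = t then 1 else 0))"

definition Eset :: "nat \<Rightarrow> nat \<Rightarrow> z2z4vec set" where
  "Eset a b = insert 0 (eb ` {..<a} \<union> eqv ` {..<b} \<union> (\<lambda>t. - eqv t) ` {..<b})"

lemma comp_simps [simp]:
  "fst (v - c) i = fst v i - fst c i" "snd (v - c) j = snd v j - snd c j"
  "fst (v + c) i = fst v i + fst c i" "snd (v + c) j = snd v j + snd c j"
  "fst (- v) i = - fst v i" "snd (- v) j = - snd v j"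
  "fst (0::z2z4vec) i = 0" "snd (0::z2z4vec) j = 0"
  by (simp_all add: fun_diff_def fun_Compl_def)

lemma unit_simps [simp]:
  "fst (eb s) i = (if i = s then 1 else 0)" "snd (eb s) j = 0"
  "fst (eqv t) i = 0" "snd (eqv t) j = (if j = t then 1 else 0)"
  by (simp_all add: eb_def eqv_def)

lemma vec_eqI: "(\<And>i. fst v i = fst w i) \<Longrightarrow> (\<And>j. snd v j = snd w j) \<Longrightarrow> (v::z2z4vec) = w"
  by (simp add: prod_eq_iff fun_eq_iff)

lemma vec_eqD1: "(v::z2z4vec) = w \<Longrightarrow> fst v i = fst w i" by simp
lemma vec_eqD2: "(v::z2z4vec) = w \<Longrightarrow> snd v j = snd w j" by simp

lemma eb_amb: "s < a \<Longrightarrow> eb s \<in> ambient a b" by (auto simp: ambient_iff eb_def)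
lemma eqv_amb: "t < b \<Longrightarrow> eqv t \<in> ambient a b" by (auto simp: ambient_iff eqv_def)
lemma Eset_amb: "Eset a b \<subseteq> ambient a b"
proof -
  have "t < b \<Longrightarrow> - eqv t \<in> ambient a b" for t using eqv_amb sgD(3)[OF sg_ambient] by blast
  then show ?thesis using eb_amb eqv_amb sgD(1)[OF sg_ambient] by (auto simp: Eset_def)
qed

lemma gray_inj: "gray x = gray y \<Longrightarrow> x = y"
  using ex4[of x] ex4[of y] by (elim disjE) (simp_all add: gray_def)

lemma gray_one: "x - y = 1 \<or> x - y = - 1 \<longleftrightarrow> x \<noteq> y \<and> (fst (gray x) = fst (gray y) \<or> snd (gray x) = snd (gray y))"
  using ex4[of x] ex4[of y] by (elim disjE) (simp_all add: gray_def)

lemma Gray_bin: "p < a \<Longrightarrow> Gray a b v p = fst v p" by (simp add: Gray_def)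
lemma Gray_q0: "t < b \<Longrightarrow> Gray a b v (a + 2*t) = fst (gray (snd v t))" by (simp add: Gray_def)
lemma Gray_q1: "t < b \<Longrightarrow> Gray a b v (a + 2*t + 1) = snd (gray (snd v t))" by (simp add: Gray_def)

lemma pos_cases: "(p::nat) < a + 2*b \<Longrightarrow> p < a \<or> (\<exists>t<b. p = a + 2*t) \<or> (\<exists>t<b. p = a+2*t+1)"
proof -
  assume h: "p < a + 2*b"
  show ?thesis
  proof (cases "p < a")
    case False
    define t where "t = (p - a) div 2"
    have "p = a + 2*t \<or> p = a + 2*t+1" using False unfolding t_def by presburger
    moreover have "t < b" using h False unfolding t_def by linarith
    ultimately show ?thesis by blast
  qed simp
qed

lemma fst_eq_amb: "v \<in> ambient a b \<Longrightarrow> c \<in> ambient a b \<Longrightarrow> (\<And>i. i < a \<Longrightarrow> fst v i = fst c i) \<Longrightarrow> fst v = fst c"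
  by (auto simp: ambient_iff fun_eq_iff) (metis not_le)
lemma snd_eq_amb: "v \<in> ambient a b \<Longrightarrow> c \<in> ambient a b \<Longrightarrow> (\<And>j. j < b \<Longrightarrow> snd v j = snd c j) \<Longrightarrow> snd v = snd c"
  by (auto simp: ambient_iff fun_eq_iff) (metis not_le)

lemma Gray_snd_only: "snd v = snd c \<Longrightarrow> a \<le> p \<Longrightarrow> Gray a b v p = Gray a b c p"
  by (simp add: Gray_def)
lemma Gray_fst_only: "fst v = fst c \<Longrightarrow> p < a \<Longrightarrow> Gray a b v p = Gray a b c p"
  by (simp add: Gray_def)

lemma Gray_q_eq: "t < b \<Longrightarrow> Gray a b v (a + 2*t) = Gray a b c (a + 2*t) \<Longrightarrow>
   Gray a b v (a + 2*t + 1) = Gray a b c (a + 2*t + 1) \<Longrightarrow> snd v t = snd c t"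
  by (metis Gray_q0 Gray_q1 gray_inj prod.collapse)

lemma Gray_inj_amb: assumes "v \<in> ambient a b" "c \<in> ambient a b" "Gray a b v = Gray a b c"
  shows "v = c"
proof -
  have G: "\<And>p. Gray a b v p = Gray a b c p" using assms(3) by simp
  have "fst v = fst c" by (rule fst_eq_amb[OF assms(1,2)]) (metis Gray_bin assms(3))
  moreover have "snd v = snd c" by (rule snd_eq_amb[OF assms(1,2)], rule Gray_q_eq[where a=a and b=b]) (simp_all add: G)
  ultimately show ?thesis by (simp add: prod_eq_iff)
qed

lemma Gray_q1s: "t < b \<Longrightarrow> Gray a b v (Suc (a + 2*t)) = snd (gray (snd v t))" using Gray_q1[of t b a v] by simp

lemma diff_ne: "(x::'a::ab_group_add) \<noteq> y \<longleftrightarrow> x - y \<noteq> 0" by simp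

lemma two_ne0: "(x::2) \<noteq> 0 \<Longrightarrow> x = 1" using ex2[of x] by auto

lemma ham_char:
  assumes v: "v \<in> ambient a b" and c: "c \<in> ambient a b"
  shows "hamming (a+2*b) (Gray a b v) (Gray a b c) \<le> 1 \<longleftrightarrow> v - c \<in> Eset a b"
proof -
  define S where "S = {i. i < a+2*b \<and> Gray a b v i \<noteq> Gray a b c i}"
  have fS: "finite S" unfolding S_def by simp
  have ham: "hamming (a+2*b) (Gray a b v) (Gray a b c) = card S" unfolding hamming_def S_def ..
  have vz: "\<And>i. i \<ge> a \<Longrightarrow> fst v i = 0" "\<And>j. j \<ge> b \<Longrightarrow> snd v j = 0" using v by (auto simp: ambient_iff)
  have cz: "\<And>i. i \<ge> a \<Longrightarrow> fst c i = 0" "\<And>j. j \<ge> b \<Longrightarrow> snd c j = 0" using c by (auto simp: ambient_iff)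
  have "(\<forall>p\<in>S. \<forall>q\<in>S. p = q) \<longleftrightarrow> v - c \<in> Eset a b"
  proof
    assume H: "\<forall>p\<in>S. \<forall>q\<in>S. p = q"
    show "v - c \<in> Eset a b"
    proof (cases "S = {}")
      case True
      then have eq: "\<And>p. p < a + 2*b \<Longrightarrow> Gray a b v p = Gray a b c p" unfolding S_def by auto
      have "fst v = fst c" by (rule fst_eq_amb[OF v c]) (metis Gray_bin eq trans_less_add1)
      moreover have "snd v = snd c" 
        by (rule snd_eq_amb[OF v c], rule Gray_q_eq[where a=a and b=b]) (auto intro!: eq)
      ultimately have "v - c = 0" by (simp add: prod_eq_iff)
      then show ?thesis by (simp add: Eset_def)
    next
      case False
      then obtain p where pS: "p \<in> S" by auto
      have eq: "\<And>q. q < a + 2*b \<Longrightarrow> q \<noteq> p \<Longrightarrow> Gray a b v q = Gray a b c q"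
        using H pS unfolding S_def by blast
      have pn: "p < a + 2*b" "Gray a b v p \<noteq> Gray a b c p" using pS unfolding S_def by auto
      show ?thesis
      proof (cases "p < a")
        case True note pa = True
        have f: "fst v i - fst c i = fst (eb p) i" for i
        proof (cases "i < a")
          case True
          show ?thesis
          proof (cases "i = p")
            case True
            then have "fst v i \<noteq> fst c i" using pn pa Gray_bin by metis
            then show ?thesis using True two_ne0[of "fst v i - fst c i"] by simp
          next
            case False
            then show ?thesis using eq[of i] \<open>i < a\<close> by (simp add: Gray_bin)
          qed
        next
          case False then show ?thesis using vz cz pa by simp
        qed
        have eq': "\<And>q. a \<le> q \<Longrightarrow> q < a + 2*b \<Longrightarrow> Gray a b v q = Gray a b c q"
          using pa eq by simp
        have "snd v = snd c"
          by (rule snd_eq_amb[OF v c], rule Gray_q_eq[where a=a and b=b]) (auto intro!: eq')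
        then have "v - c = eb p" using f by (intro vec_eqI) simp_all
        then show ?thesis using pa by (simp add: Eset_def)
      next
        case False
        then obtain t where tb: "t < b" and pt: "p = a + 2*t \<or> p = a + 2*t + 1"
          using pos_cases[OF pn(1)] by blast
        have "fst v = fst c" by (rule fst_eq_amb[OF v c]) (metis Gray_bin eq trans_less_add1 pt add_lessD1 less_not_refl2 not_add_less1)
        then have f: "fst v i - fst c i = 0" for i by simp
        have oth: "snd v j = snd c j" if "j \<noteq> t" for j
        proof (cases "j < b")
          case True
          have n1: "a + 2*j \<noteq> p" "a + 2*j + 1 \<noteq> p" using that pt by auto
          show ?thesis by (rule Gray_q_eq[where a=a and b=b, OF True]; rule eq) (use True n1 in auto)
        next
          case False then show ?thesis using vz cz by simp
        qed
        have ne: "snd v t \<noteq> snd c t" using pn pt tb Gray_q0 Gray_q1 by metis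
        have one: "fst (gray (snd v t)) = fst (gray (snd c t)) \<or> snd (gray (snd v t)) = snd (gray (snd c t))"
          using pt
        proof
          assume "p = a + 2*t"
          then have "Gray a b v (a+2*t+1) = Gray a b c (a+2*t+1)" using tb by (intro eq) auto
          then show ?thesis using tb Gray_q1 by metis
        next
          assume "p = a + 2*t + 1"
          then have "Gray a b v (a+2*t) = Gray a b c (a+2*t)" using tb by (intro eq) auto
          then show ?thesis using tb Gray_q0 by metis
        qed
        have pm: "snd v t - snd c t = 1 \<or> snd v t - snd c t = - 1" using gray_one ne one by blast
        then show ?thesis
        proof
          assume h: "snd v t - snd c t = 1"
          have "v - c = eqv t" using f h oth by (intro vec_eqI) (auto simp: fun_eq_iff)
          then show ?thesis using tb by (simp add: Eset_def)
        next
          assume h: "snd v t - snd c t = - 1"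
          have "v - c = - eqv t" using f h oth by (intro vec_eqI) (auto simp: fun_eq_iff)
          then show ?thesis using tb by (simp add: Eset_def)
        qed
      qed
    qed
  next
    assume "v - c \<in> Eset a b"
    then consider "v - c = 0" | s where "s < a" "v - c = eb s" | t where "t < b" "v - c = eqv t"
      | t where "t < b" "v - c = - eqv t" by (auto simp: Eset_def)
    then show "\<forall>p\<in>S. \<forall>q\<in>S. p = q"
    proof cases
      case 1 then have "v = c" by simp
      then show ?thesis unfolding S_def by auto
    next
      case (2 s)
      have sv: "snd v = snd c" using vec_eqD2[OF 2(2)] by (simp add: fun_eq_iff)
      have fv: "i \<noteq> s \<Longrightarrow> fst v i = fst c i" for i using vec_eqD1[OF 2(2), of i] by simp
      have "p \<in> S \<Longrightarrow> p = s" for p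
      proof -
        assume "p \<in> S"
        then have pn: "p < a+2*b" "Gray a b v p \<noteq> Gray a b c p" by (auto simp: S_def)
        then have "p < a" using Gray_snd_only[OF sv] not_le by metis
        then show "p = s" using pn fv Gray_bin by metis
      qed
      then show ?thesis by auto
    next
      case (3 t)
      have fv: "fst v = fst c" using vec_eqD1[OF 3(2)] by (simp add: fun_eq_iff)
      have sv: "j \<noteq> t \<Longrightarrow> snd v j = snd c j" for j using vec_eqD2[OF 3(2), of j] by simp
      have d: "snd v t - snd c t = 1" using vec_eqD2[OF 3(2), of t] by simp
      have g: "fst (gray (snd v t)) = fst (gray (snd c t)) \<or> snd (gray (snd v t)) = snd (gray (snd c t))"
        using gray_one d by blast
      have loc: "p \<in> S \<Longrightarrow> p = a + 2*t \<or> p = a + 2*t+1" for p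
      proof -
        assume "p \<in> S"
        then have pn: "p < a+2*b" "Gray a b v p \<noteq> Gray a b c p" by (auto simp: S_def)
        from pos_cases[OF pn(1)] show ?thesis
        proof (elim disjE exE conjE)
          assume "p < a" then show ?thesis using pn Gray_fst_only[OF fv] by metis
        next
          fix t' assume "t' < b" "p = a + 2*t'"
          then show ?thesis using pn sv[of t'] Gray_q0 by metis
        next
          fix t' assume "t' < b" "p = a + 2*t' + 1"
          then show ?thesis using pn sv[of t'] Gray_q1 by metis
        qed
      qed
      show ?thesis
      proof (intro ballI, rule ccontr)
        fix p q assume pq: "p \<in> S" "q \<in> S" "p \<noteq> q"
        then have "a + 2*t \<in> S" "a + 2*t + 1 \<in> S" using loc by metis+
        then have "fst (gray (snd v t)) \<noteq> fst (gray (snd c t))" "snd (gray (snd v t)) \<noteq> snd (gray (snd c t))"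
          using 3(1) by (simp_all add: S_def Gray_q0 Gray_q1s)
        with g show False by blast
      qed
    next
      case (4 t)
      have fv: "fst v = fst c" using vec_eqD1[OF 4(2)] by (simp add: fun_eq_iff)
      have sv: "j \<noteq> t \<Longrightarrow> snd v j = snd c j" for j using vec_eqD2[OF 4(2), of j] by simp
      have d: "snd v t - snd c t = - 1" using vec_eqD2[OF 4(2), of t] by simp
      have g: "fst (gray (snd v t)) = fst (gray (snd c t)) \<or> snd (gray (snd v t)) = snd (gray (snd c t))"
        using gray_one d by blast
      have loc: "p \<in> S \<Longrightarrow> p = a + 2*t \<or> p = a + 2*t+1" for p
      proof -
        assume "p \<in> S"
        then have pn: "p < a+2*b" "Gray a b v p \<noteq> Gray a b c p" by (auto simp: S_def)
        from pos_cases[OF pn(1)] show ?thesis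
        proof (elim disjE exE conjE)
          assume "p < a" then show ?thesis using pn Gray_fst_only[OF fv] by metis
        next
          fix t' assume "t' < b" "p = a + 2*t'"
          then show ?thesis using pn sv[of t'] Gray_q0 by metis
        next
          fix t' assume "t' < b" "p = a + 2*t' + 1"
          then show ?thesis using pn sv[of t'] Gray_q1 by metis
        qed
      qed
      show ?thesis
      proof (intro ballI, rule ccontr)
        fix p q assume pq: "p \<in> S" "q \<in> S" "p \<noteq> q"
        then have "a + 2*t \<in> S" "a + 2*t + 1 \<in> S" using loc by metis+
        then have "fst (gray (snd v t)) \<noteq> fst (gray (snd c t))" "snd (gray (snd v t)) \<noteq> snd (gray (snd c t))"
          using 4(1) by (simp_all add: S_def Gray_q0 Gray_q1s)
        with g show False by blast
      qed
    qed
  qed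
  moreover have "card S \<le> 1 \<longleftrightarrow> (\<forall>p\<in>S. \<forall>q\<in>S. p = q)" using card_le_Suc0_iff_eq[OF fS] by simp
  ultimately show ?thesis using ham by simp
qed

definition Lf :: "nat \<Rightarrow> nat \<Rightarrow> z2z4vec \<Rightarrow> z2z4vec \<Rightarrow> 4" where
  "Lf a b z v = inner_z2z4 a b v z"

lemma z2_add: "2 * z2_to_z4 ((x + y) * u) = 2 * z2_to_z4 (x * u) + 2 * z2_to_z4 (y * u)"
  using ex2[of x] ex2[of y] ex2[of u] by (elim disjE) (simp_all add: z2_to_z4_def)

lemma Lf_add: "Lf a b z (v + w) = Lf a b z v + Lf a b z w"
proof -
  have "2 * (\<Sum>i<a. z2_to_z4 (fst (v + w) i * fst z i)) =
        2 * (\<Sum>i<a. z2_to_z4 (fst v i * fst z i)) + 2 * (\<Sum>i<a. z2_to_z4 (fst w i * fst z i))"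
    by (simp add: sum_distrib_left z2_add sum.distrib)
  moreover have "(\<Sum>j<b. snd (v + w) j * snd z j) = (\<Sum>j<b. snd v j * snd z j) + (\<Sum>j<b. snd w j * snd z j)"
    by (simp add: distrib_right sum.distrib)
  ultimately show ?thesis unfolding Lf_def inner_z2z4_def by (simp add: algebra_simps)
qed

lemma Lf_0: "Lf a b z 0 = 0"
  unfolding Lf_def inner_z2z4_def by (simp add: z2_to_z4_def)

lemma Lf_neg: "Lf a b z (- v) = - Lf a b z v"
  using Lf_add[of a b z v "- v"] Lf_0[of a b z] by (simp add: eq_neg_iff_add_eq_0 add.commute)

lemma Lf_diff: "Lf a b z (v - w) = Lf a b z v - Lf a b z w"
  using Lf_add[of a b z v "- w"] Lf_neg[of a b z w] by simp

lemma Lf_eb: "s < a \<Longrightarrow> Lf a b z (eb s) = 2 * z2_to_z4 (fst z s)"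
proof -
  assume s: "s < a"
  have "(\<Sum>i<a. z2_to_z4 (fst (eb s) i * fst z i)) = (\<Sum>i<a. if i = s then z2_to_z4 (fst z s) else 0)"
    by (rule sum.cong) (auto simp: z2_to_z4_def)
  also have "\<dots> = z2_to_z4 (fst z s)" using s by simp
  finally show ?thesis unfolding Lf_def inner_z2z4_def by simp
qed

lemma Lf_eqv: "t < b \<Longrightarrow> Lf a b z (eqv t) = snd z t"
proof -
  assume t: "t < b"
  have "(\<Sum>i<a. z2_to_z4 (fst (eqv t) i * fst z i)) = 0"
    by (simp add: z2_to_z4_def)
  moreover have "(\<Sum>j<b. snd (eqv t) j * snd z j) = (\<Sum>j<b. if j = t then snd z t else 0)"
    by (rule sum.cong) auto
  moreover have "\<dots> = snd z t" using t by simp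
  ultimately show ?thesis unfolding Lf_def inner_z2z4_def by simp
qed

lemma Lf_dual: "z \<in> dual_code a b C \<Longrightarrow> c \<in> C \<Longrightarrow> Lf a b z c = 0"
  unfolding dual_code_def Lf_def by auto

lemma Eset_mem: "0 \<in> Eset a b" "s < a \<Longrightarrow> eb s \<in> Eset a b" "t < b \<Longrightarrow> eqv t \<in> Eset a b"
  "t < b \<Longrightarrow> - eqv t \<in> Eset a b"
  by (auto simp: Eset_def)

locale pc =
  fixes a b :: nat and C :: "z2z4vec set"
  assumes ac: "additive_code a b C" and op: "one_perfect_z2z4 a b C"
begin

lemma sgC: "sg C" and CA: "C \<subseteq> ambient a b" using code_sg[OF ac] by auto

lemma rep_ex: assumes v: "v \<in> ambient a b" shows "\<exists>\<rho>\<in>Eset a b. v - \<rho> \<in> C"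
proof -
  have P: "\<forall>x\<in>bin_space (a+2*b). \<exists>!c. c \<in> Gray a b ` C \<and> hamming (a+2*b) x c \<le> 1"
    using op unfolding one_perfect_z2z4_def one_perfect_bin_def by blast
  have "Gray a b v \<in> bin_space (a+2*b)" unfolding bin_space_def Gray_def by auto
  then obtain c' where "c' \<in> Gray a b ` C" "hamming (a+2*b) (Gray a b v) c' \<le> 1" using P by blast
  then obtain c where c: "c \<in> C" "hamming (a+2*b) (Gray a b v) (Gray a b c) \<le> 1" by blast
  then have "v - c \<in> Eset a b" using ham_char[OF v] CA by blast
  moreover have "v - (v - c) \<in> C" using c by simp
  ultimately show ?thesis by blast
qed

lemma rep_uniq: assumes r1: "\<rho>1 \<in> Eset a b" and r2: "\<rho>2 \<in> Eset a b" and d: "\<rho>1 - \<rho>2 \<in> C"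
  shows "\<rho>1 = \<rho>2"
proof -
  have P: "\<forall>x\<in>bin_space (a+2*b). \<exists>!c. c \<in> Gray a b ` C \<and> hamming (a+2*b) x c \<le> 1"
    using op unfolding one_perfect_z2z4_def one_perfect_bin_def by blast
  have A1: "\<rho>1 \<in> ambient a b" using r1 Eset_amb by blast
  have "Gray a b \<rho>1 \<in> bin_space (a+2*b)" unfolding bin_space_def Gray_def by auto
  then have U: "\<exists>!c. c \<in> Gray a b ` C \<and> hamming (a+2*b) (Gray a b \<rho>1) c \<le> 1" using P by blast
  have z: "0 \<in> C" using sgD(1)[OF sgC] .
  have h1: "hamming (a+2*b) (Gray a b \<rho>1) (Gray a b 0) \<le> 1"
    using ham_char[OF A1, of 0] r1 z CA by auto
  have h2: "hamming (a+2*b) (Gray a b \<rho>1) (Gray a b (\<rho>1 - \<rho>2)) \<le> 1"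
    using ham_char[OF A1, of "\<rho>1 - \<rho>2"] r2 d CA by auto
  have "Gray a b 0 = Gray a b (\<rho>1 - \<rho>2)" using U h1 h2 z d by blast
  then have "0 = \<rho>1 - \<rho>2" using Gray_inj_amb z d CA by blast
  then show ?thesis by simp
qed

lemma double_ne: assumes t: "t < b" shows "eqv t + eqv t \<notin> C"
proof
  assume "eqv t + eqv t \<in> C"
  then have "eqv t - (- eqv t) \<in> C" by simp
  then have "eqv t = - eqv t" using rep_uniq[OF Eset_mem(3)[OF t] Eset_mem(4)[OF t]] by simp
  then have "snd (eqv t) t = snd (- eqv t) t" by simp
  then show False by simp
qed

lemma ord2: assumes w: "w \<in> ambient a b" and ww: "w + w \<in> C"
  shows "w \<in> C \<or> (\<exists>s<a. w - eb s \<in> C)"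
proof -
  obtain \<rho> where r: "\<rho> \<in> Eset a b" "w - \<rho> \<in> C" using rep_ex[OF w] by blast
  have "\<rho> + \<rho> = (w + w) - (w - \<rho>) - (w - \<rho>)" by (simp add: algebra_simps)
  then have rr: "\<rho> + \<rho> \<in> C" using ww r sgD[OF sgC] by metis
  from r(1) consider "\<rho> = 0" | s where "s < a" "\<rho> = eb s" | t where "t < b" "\<rho> = eqv t"
      | t where "t < b" "\<rho> = - eqv t" by (auto simp: Eset_def)
  then show ?thesis
  proof cases
    case 1 then show ?thesis using r by simp
  next
    case (2 s) then show ?thesis using r by blast
  next
    case (3 t) then show ?thesis using rr double_ne by blast
  next
    case (4 t)
    then have "- (\<rho> + \<rho>) \<in> C" using rr sgD(3)[OF sgC] by blast
    then show ?thesis using 4 double_ne by (simp add: algebra_simps)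
  qed
qed

lemma eb_inj: "s < a \<Longrightarrow> s' < a \<Longrightarrow> eb s - eb s' \<in> C \<Longrightarrow> s = s'"
proof -
  assume h: "s < a" "s' < a" "eb s - eb s' \<in> C"
  then have "eb s = eb s'" using rep_uniq[OF Eset_mem(2)[OF h(1)] Eset_mem(2)[OF h(2)]] by simp
  then have "fst (eb s) s = fst (eb s') s" by simp
  then show "s = s'" by (auto split: if_splits)
qed

lemma eb_notC: "s < a \<Longrightarrow> eb s \<notin> C"
proof
  assume h: "s < a" "eb s \<in> C"
  then have "eb s - 0 \<in> C" by simp
  then have "eb s = 0" using rep_uniq[OF Eset_mem(2)[OF h(1)] Eset_mem(1)] by simp
  then have "fst (eb s) s = fst (0::z2z4vec) s" by simp
  then show False by simp
qed

end

definition additive_on :: "'a::ab_group_add set \<Rightarrow> ('a \<Rightarrow> 4) \<Rightarrow> bool" where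
  "additive_on S f \<longleftrightarrow> (\<forall>x\<in>S. \<forall>y\<in>S. f (x + y) = f x + f y)"

fun nsm :: "nat \<Rightarrow> 'a::ab_group_add \<Rightarrow> 'a" where
  "nsm 0 x = 0" | "nsm (Suc k) x = x + nsm k x"

lemma nsm_add: "nsm (m + n) x = nsm m x + nsm n x"
  by (induct m) (simp_all add: add.assoc)

lemma nsm_4q: "nsm 4 x = 0 \<Longrightarrow> nsm (4 * q) x = 0"
proof (induct q)
  case (Suc q)
  have "nsm (4 * Suc q) x = nsm 4 x + nsm (4*q) x" using nsm_add[of 4 "4*q" x] by simp
  then show ?case using Suc by simp
qed simp

lemma nsm_mod: assumes "nsm 4 x = 0" shows "nsm k x = nsm (k mod 4) x"
proof -
  have "nsm k x = nsm (4 * (k div 4)) x + nsm (k mod 4) x"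
    using nsm_add[of "4 * (k div 4)" "k mod 4" x] by simp
  then show ?thesis using nsm_4q[OF assms] by simp
qed

lemma nsm_in: "sg S \<Longrightarrow> x \<in> S \<Longrightarrow> nsm k x \<in> S"
  by (induct k) (auto dest: sgD)

lemma ofnat4_mod: "(of_nat k :: 4) = of_nat (k mod 4)"
proof -
  have "(of_nat k :: 4) = of_nat (4 * (k div 4)) + of_nat (k mod 4)"
    by (metis div_mult_mod_eq of_nat_add mult.commute)
  moreover have "(of_nat (4 * (k div 4)) :: 4) = 0"
  proof -
    have "(4::4) = 0" by simp
    then show ?thesis by (simp only: of_nat_mult of_nat_numeral) simp
  qed
  ultimately show ?thesis by simp
qed

lemma mod4_cases: "(k::nat) mod 4 = 0 \<or> k mod 4 = 1 \<or> k mod 4 = 2 \<or> k mod 4 = 3" by arith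

lemma add_on_0: "sg S \<Longrightarrow> additive_on S f \<Longrightarrow> f 0 = 0"
  unfolding additive_on_def using sgD(1) by (metis add.right_neutral add_right_imp_eq add_0)

lemma add_on_diff: assumes "sg S" "additive_on S f" "x \<in> S" "y \<in> S" shows "f (x - y) = f x - f y"
proof -
  have "f ((x - y) + y) = f (x - y) + f y" using assms sgD(4) unfolding additive_on_def by blast
  then show ?thesis by simp
qed

lemma two_cases4: "(y::4) + y = 0 \<Longrightarrow> y = 0 \<or> y = 2"
  using ex4[of y] by auto

lemma ext_step:
  assumes S: "sg S" and f: "additive_on S f" and x4: "nsm 4 x = 0"
    and Q0: "\<And>k. nsm k x \<in> S \<Longrightarrow> f (nsm k x) = of_nat k * c"
  defines "S' \<equiv> {s + nsm k x | s k. s \<in> S}"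
  shows "\<exists>f'. additive_on S' f' \<and> (\<forall>s\<in>S. f' s = f s) \<and> f' x = c"
proof -
  have cons1: "f s1 + of_nat k1 * c = f s2 + of_nat k2 * c"
    if "s1 \<in> S" "s2 \<in> S" "s1 + nsm k1 x = s2 + nsm k2 x" "k1 \<le> k2" for s1 s2 k1 k2
  proof -
    have "nsm k2 x = nsm k1 x + nsm (k2 - k1) x" using nsm_add[of k1 "k2-k1" x] that(4) by simp
    then have "s1 - s2 = nsm (k2 - k1) x" using that(3) by (simp add: algebra_simps)
    then have m: "nsm (k2 - k1) x \<in> S" using sgD(4)[OF S that(1,2)] by simp
    have "f s1 = f s2 + f (s1 - s2)"
      using add_on_diff[OF S f that(1,2)] by simp
    also have "\<dots> = f s2 + of_nat (k2 - k1) * c" using Q0[OF m] \<open>s1 - s2 = _\<close> by simp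
    finally have "f s1 + of_nat k1 * c = f s2 + (of_nat (k2 - k1) + of_nat k1) * c"
      by (simp add: algebra_simps)
    also have "(of_nat (k2 - k1) + of_nat k1 :: 4) = of_nat k2"
      using that(4) by (metis le_add_diff_inverse2 of_nat_add)
    finally show ?thesis .
  qed
  have cons: "f s1 + of_nat k1 * c = f s2 + of_nat k2 * c"
    if "s1 \<in> S" "s2 \<in> S" "s1 + nsm k1 x = s2 + nsm k2 x" for s1 s2 k1 k2
  proof (cases "k1 \<le> k2")
    case True then show ?thesis using cons1 that by blast
  next
    case False then show ?thesis using cons1[of s2 s1 k2 k1] that by simp
  qed
  define f' where "f' y = (let p = (SOME p. fst p \<in> S \<and> y = fst p + nsm (snd p) x) in f (fst p) + of_nat (snd p) * c)" for y
  have W: "f' (s + nsm k x) = f s + of_nat k * c" if "s \<in> S" for s k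
  proof -
    let ?P = "\<lambda>p. fst p \<in> S \<and> s + nsm k x = fst p + nsm (snd p) x"
    have "?P (s, k)" using that by simp
    then have "?P (SOME p. ?P p)" by (rule someI)
    moreover define p where "p = (SOME p. ?P p)"
    ultimately have hp: "fst p \<in> S" "fst p + nsm (snd p) x = s + nsm k x" by auto
    have "f' (s + nsm k x) = f (fst p) + of_nat (snd p) * c" unfolding f'_def Let_def p_def by simp
    also have "\<dots> = f s + of_nat k * c" by (rule cons[OF hp(1) that hp(2)])
    finally show ?thesis .
  qed
  have "additive_on S' f'"
    unfolding additive_on_def
  proof (intro ballI)
    fix y1 y2 assume "y1 \<in> S'" "y2 \<in> S'"
    then obtain s1 k1 s2 k2 where y: "s1 \<in> S" "y1 = s1 + nsm k1 x" "s2 \<in> S" "y2 = s2 + nsm k2 x"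
      unfolding S'_def by blast
    have "y1 + y2 = (s1 + s2) + nsm (k1 + k2) x" using y nsm_add[of k1 k2 x] by (simp add: algebra_simps)
    then have "f' (y1 + y2) = f (s1 + s2) + of_nat (k1 + k2) * c" using W sgD(2)[OF S y(1,3)] by simp
    also have "\<dots> = (f s1 + of_nat k1 * c) + (f s2 + of_nat k2 * c)"
      using f y(1,3) unfolding additive_on_def by (simp add: algebra_simps)
    also have "\<dots> = f' y1 + f' y2" using W y by simp
    finally show "f' (y1 + y2) = f' y1 + f' y2" .
  qed
  moreover have "\<forall>s\<in>S. f' s = f s" using W[of _ 0] by simp
  moreover have "f' x = c" using W[of 0 1] sgD(1)[OF S] add_on_0[OF S f] by simp
  ultimately show ?thesis by blast
qed

lemma S'_props:
  assumes S: "sg S" and x4: "nsm 4 x = 0"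
  defines "S' \<equiv> {s + nsm k x | s k. s \<in> S}"
  shows "sg S'" "S \<subseteq> S'" "x \<in> S'"
proof -
  show "S \<subseteq> S'"
  proof
    fix s assume "s \<in> S"
    moreover have "s = s + nsm 0 x" by simp
    ultimately show "s \<in> S'" unfolding S'_def by blast
  qed
  have "x = 0 + nsm 1 x" by simp
  then show "x \<in> S'" unfolding S'_def using sgD(1)[OF S] by blast
  have neg: "- nsm k x = nsm (3 * k) x" for k
  proof -
    have "nsm (3*k) x + nsm k x = nsm (4 * k) x" using nsm_add[of "3*k" k x] by simp
    then have "nsm (3*k) x + nsm k x = 0" using nsm_4q[OF x4, of k] by simp
    then have "nsm k x + nsm (3*k) x = 0" by (simp only: add.commute)
    then show ?thesis by (rule minus_unique)
  qed
  show "sg S'" unfolding sg_def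
  proof (intro conjI ballI)
    have "(0::'a) = 0 + nsm 0 x" by simp
    then show "0 \<in> S'" unfolding S'_def using sgD(1)[OF S] by blast
  next
    fix y1 y2 assume "y1 \<in> S'" "y2 \<in> S'"
    then obtain s1 k1 s2 k2 where y: "s1 \<in> S" "y1 = s1 + nsm k1 x" "s2 \<in> S" "y2 = s2 + nsm k2 x"
      unfolding S'_def by blast
    have "y1 + y2 = (s1 + s2) + nsm (k1 + k2) x" using y nsm_add[of k1 k2 x] by (simp add: algebra_simps)
    then show "y1 + y2 \<in> S'" unfolding S'_def using sgD(2)[OF S y(1,3)] by blast
  next
    fix y assume "y \<in> S'"
    then obtain s k where y: "s \<in> S" "y = s + nsm k x" unfolding S'_def by blast
    have "- y = (- s) + nsm (3*k) x" using y neg[of k] by simp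
    then show "- y \<in> S'" unfolding S'_def using sgD(3)[OF S y(1)] by blast
  qed
qed

lemma ext_all:
  assumes A: "finite A" "sg A" and tor: "\<And>y. y \<in> A \<Longrightarrow> nsm 4 y = 0"
  shows "sg S \<Longrightarrow> S \<subseteq> A \<Longrightarrow> additive_on S f \<Longrightarrow> \<exists>F. additive_on A F \<and> (\<forall>s\<in>S. F s = f s)"
proof (induction "card (A - S)" arbitrary: S f rule: less_induct)
  case less
  show ?case
  proof (cases "A \<subseteq> S")
    case True
    then have "A = S" using less.prems by blast
    then show ?thesis using less.prems by blast
  next
    case False
    then obtain x where x: "x \<in> A" "x \<notin> S" by blast
    have x4: "nsm 4 x = 0" using tor x by blast
    define c where "c = (if nsm 2 x \<in> S \<and> f (nsm 2 x) \<noteq> 0 then (1::4) else 0)"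
    have Q0: "f (nsm k x) = of_nat k * c" if k: "nsm k x \<in> S" for k
    proof -
      have k': "nsm (k mod 4) x \<in> S" using k nsm_mod[OF x4, of k] by simp
      have ok: "(of_nat k :: 4) = of_nat (k mod 4)" by (rule ofnat4_mod)
      from mod4_cases[of k] show ?thesis
      proof (elim disjE)
        assume h: "k mod 4 = 0"
        then show ?thesis using nsm_mod[OF x4, of k] ok add_on_0[OF less.prems(1,3)] by simp
      next
        assume h: "k mod 4 = 1"
        then show ?thesis using k' x by simp
      next
        assume h: "k mod 4 = 2"
        have e: "nsm 2 x + nsm 2 x = nsm 4 x" using nsm_add[of 2 2 x] by simp
        have s2: "nsm 2 x \<in> S" using k' h by simp
        have "f (nsm 2 x) + f (nsm 2 x) = 0"
          using less.prems(3) s2 e x4 add_on_0[OF less.prems(1,3)] unfolding additive_on_def by metis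
        then have "f (nsm 2 x) = 0 \<or> f (nsm 2 x) = 2" by (rule two_cases4)
        then show ?thesis using h nsm_mod[OF x4, of k] ok s2 unfolding c_def by auto
      next
        assume h: "k mod 4 = 3"
        then have s3: "nsm 3 x \<in> S" using k' by simp
        have "nsm 3 x + nsm 3 x + nsm 3 x = nsm 9 x" using nsm_add[of 3 3 x] nsm_add[of 6 3 x] by simp
        also have "\<dots> = x" using nsm_mod[OF x4, of 9] by simp
        finally have "x \<in> S" using s3 sgD(2)[OF less.prems(1)] by metis
        then show ?thesis using x by simp
      qed
    qed
    define S' where "S' = {s + nsm k x | s k. s \<in> S}"
    obtain f' where f': "additive_on S' f'" "\<forall>s\<in>S. f' s = f s"
      using ext_step[OF less.prems(1,3) x4 Q0] unfolding S'_def by blast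
    have S'p: "sg S'" "S \<subseteq> S'" "x \<in> S'" using S'_props[OF less.prems(1) x4] unfolding S'_def by auto
    have S'A: "S' \<subseteq> A"
    proof
      fix y assume "y \<in> S'"
      then obtain s k where "s \<in> S" "y = s + nsm k x" unfolding S'_def by blast
      then show "y \<in> A" using less.prems(2) nsm_in[OF A(2) x(1)] sgD(2)[OF A(2)] by blast
    qed
    have "A - S' \<subset> A - S" using S'p x by blast
    then have "card (A - S') < card (A - S)" using A(1) by (meson finite_Diff psubset_card_mono)
    then obtain F where "additive_on A F" "\<forall>s\<in>S'. F s = f' s"
      using less.hyps[OF _ S'p(1) S'A f'(1)] by blast
    moreover have "\<forall>s\<in>S. F s = f s" using calculation(2) f'(2) S'p(2) by (metis subsetD)
    ultimately show ?thesis by blast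
  qed
qed

lemma fun_sum_apply: "(\<Sum>x\<in>I. (g x :: nat \<Rightarrow> 'b::comm_monoid_add)) i = (\<Sum>x\<in>I. g x i)"
proof (cases "finite I")
  case True then show ?thesis by (induct I rule: finite_induct) simp_all
qed simp

lemma vec_sum_fst: "fst (\<Sum>x\<in>I. (g x :: z2z4vec)) i = (\<Sum>x\<in>I. fst (g x) i)"
  by (simp add: fst_sum fun_sum_apply)
lemma vec_sum_snd: "snd (\<Sum>x\<in>I. (g x :: z2z4vec)) i = (\<Sum>x\<in>I. snd (g x) i)"
  by (simp add: snd_sum fun_sum_apply)

lemma Lf_sum: "Lf a b z (\<Sum>x\<in>I. g x) = (\<Sum>x\<in>I. Lf a b z (g x))"
proof (cases "finite I")
  case True then show ?thesis by (induct I rule: finite_induct) (simp_all add: Lf_0 Lf_add)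
qed (simp add: Lf_0)

lemma sg_sum: assumes S: "sg S" shows "(\<And>x. x \<in> I \<Longrightarrow> g x \<in> S) \<Longrightarrow> (\<Sum>x\<in>I. g x) \<in> S"
proof (induct I rule: infinite_finite_induct)
  case (infinite I) then show ?case using sgD(1)[OF S] by simp
next
  case empty then show ?case using sgD(1)[OF S] by simp
next
  case (insert x I)
  have "(\<Sum>x\<in>I. g x) \<in> S" using insert.hyps(3) insert.prems by blast
  moreover have "g x \<in> S" using insert.prems by blast
  ultimately show ?case using sgD(2)[OF S] insert.hyps(1,2) by simp
qed

lemma add_on_sum: assumes S: "sg S" and F: "additive_on S F" and g: "\<And>x. x \<in> I \<Longrightarrow> g x \<in> S"
  shows "F (\<Sum>x\<in>I. g x) = (\<Sum>x\<in>I. F (g x))"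
proof (cases "finite I")
  case True
  from True g show ?thesis
  proof (induct I rule: finite_induct)
    case empty then show ?case using add_on_0[OF S F] by simp
  next
    case (insert x I)
    have "g x \<in> S" using insert.prems by auto
    moreover have "(\<Sum>x\<in>I. g x) \<in> S" by (rule sg_sum[OF S]) (use insert.prems in auto)
    ultimately have "g x \<in> S" "(\<Sum>x\<in>I. g x) \<in> S" by auto
    then show ?case using insert F unfolding additive_on_def by simp
  qed
qed (simp add: add_on_0[OF S F])

lemma tor2: "(x::2) + x = 0" using ex2[of x] by auto
lemma tor4: "(x::4) + x + x + x = 0" using ex4[of x] by auto
lemma tor2': "(x::2) + x + x + x = 0" using ex2[of x] by auto

lemma nsm4: "nsm 4 (y::z2z4vec) = y + y + y + y"
  by (simp add: numeral_eq_Suc add.assoc)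

lemma tor_vec: "nsm 4 (y::z2z4vec) = 0"
proof -
  have "y + y + y + y = 0"
  proof (rule vec_eqI)
    fix i show "fst (y + y + y + y) i = fst 0 i" by (simp only: comp_simps tor2') simp
  next
    fix j show "snd (y + y + y + y) j = snd 0 j" by (simp only: comp_simps tor4) simp
  qed
  then show ?thesis by (simp add: nsm4)
qed

definition bp :: "z2z4vec \<Rightarrow> nat \<Rightarrow> z2z4vec" where
  "bp w s = ((\<lambda>i. if i = s then fst w s else 0), (\<lambda>_. 0))"
definition qp :: "z2z4vec \<Rightarrow> nat \<Rightarrow> z2z4vec" where
  "qp w t = ((\<lambda>_. 0), (\<lambda>j. if j = t then snd w t else 0))"

lemma decomp: assumes w: "w \<in> ambient a b"
  shows "w = (\<Sum>s<a. bp w s) + (\<Sum>t<b. qp w t)"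
proof (rule vec_eqI)
  fix i
  have "(\<Sum>s<a. fst (bp w s) i) = (\<Sum>s<a. if s = i then fst w i else 0)"
    by (rule sum.cong) (auto simp: bp_def)
  also have "\<dots> = fst w i" using w by (simp add: ambient_iff)
  finally show "fst w i = fst ((\<Sum>s<a. bp w s) + (\<Sum>t<b. qp w t)) i"
    by (simp add: vec_sum_fst qp_def)
next
  fix j
  have "(\<Sum>t<b. snd (qp w t) j) = (\<Sum>t<b. if t = j then snd w j else 0)"
    by (rule sum.cong) (auto simp: qp_def)
  also have "\<dots> = snd w j" using w by (simp add: ambient_iff)
  finally show "snd w j = snd ((\<Sum>s<a. bp w s) + (\<Sum>t<b. qp w t)) j"
    by (simp add: vec_sum_snd bp_def)
qed

lemma bp_amb: "s < a \<Longrightarrow> bp w s \<in> ambient a b" by (auto simp: ambient_iff bp_def)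
lemma qp_amb: "t < b \<Longrightarrow> qp w t \<in> ambient a b" by (auto simp: ambient_iff qp_def)

lemma Lf_bp: "s < a \<Longrightarrow> Lf a b z (bp w s) = 2 * z2_to_z4 (fst w s * fst z s)"
proof -
  assume s: "s < a"
  have "(\<Sum>i<a. z2_to_z4 (fst (bp w s) i * fst z i)) = (\<Sum>i<a. if i = s then z2_to_z4 (fst w s * fst z s) else 0)"
    by (rule sum.cong) (auto simp: z2_to_z4_def bp_def)
  also have "\<dots> = z2_to_z4 (fst w s * fst z s)" using s by simp
  finally show ?thesis unfolding Lf_def inner_z2z4_def by (simp add: bp_def)
qed

lemma Lf_qp: "t < b \<Longrightarrow> Lf a b z (qp w t) = snd w t * snd z t"
proof -
  assume t: "t < b"
  have "(\<Sum>i<a. z2_to_z4 (fst (qp w t) i * fst z i)) = 0"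
    by (simp add: z2_to_z4_def qp_def)
  moreover have "(\<Sum>j<b. snd (qp w t) j * snd z j) = (\<Sum>j<b. if j = t then snd w t * snd z t else 0)"
    by (rule sum.cong) (auto simp: qp_def)
  moreover have "\<dots> = snd w t * snd z t" using t by simp
  ultimately show ?thesis unfolding Lf_def inner_z2z4_def by simp
qed

definition zF :: "nat \<Rightarrow> nat \<Rightarrow> (z2z4vec \<Rightarrow> 4) \<Rightarrow> z2z4vec" where
  "zF a b F = ((\<lambda>s. if s < a \<and> F (eb s) \<noteq> 0 then 1 else 0), (\<lambda>t. if t < b then F (eqv t) else 0))"

lemma zF_amb: "zF a b F \<in> ambient a b" by (auto simp: ambient_iff zF_def)

lemma zF_Lf: assumes F: "additive_on (ambient a b) F" and w: "w \<in> ambient a b"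
  shows "Lf a b (zF a b F) w = F w"
proof -
  have S: "sg (ambient a b)" by (rule sg_ambient)
  have F0: "F 0 = 0" by (rule add_on_0[OF S F])
  have Fadd: "\<And>x y. x \<in> ambient a b \<Longrightarrow> y \<in> ambient a b \<Longrightarrow> F (x + y) = F x + F y"
    using F unfolding additive_on_def by blast
  have bpe: "Lf a b (zF a b F) (bp w s) = F (bp w s)" if s: "s < a" for s
  proof -
    have ee: "F (eb s) + F (eb s) = 0"
    proof -
      have "eb s + eb s = 0" by (rule vec_eqI) (simp_all add: tor2)
      then show ?thesis using Fadd[OF eb_amb[OF s] eb_amb[OF s]] F0 by simp
    qed
    show ?thesis
    proof (cases "fst w s = 0")
      case True
      then have "bp w s = 0" by (intro vec_eqI) (simp_all add: bp_def)
      then show ?thesis using F0 by (simp add: Lf_0)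
    next
      case False
      then have w1: "fst w s = 1" by (rule two_ne0)
      then have "bp w s = eb s" by (intro vec_eqI) (simp_all add: bp_def)
      moreover have "2 * z2_to_z4 (fst (zF a b F) s) = F (eb s)"
        using two_cases4[OF ee] s by (auto simp: zF_def z2_to_z4_def)
      ultimately show ?thesis using w1 Lf_bp[OF s, of _ "zF a b F" w] by simp
    qed
  qed
  have qpe: "Lf a b (zF a b F) (qp w t) = F (qp w t)" if t: "t < b" for t
  proof -
    have Lq: "Lf a b (zF a b F) (qp w t) = snd w t * F (eqv t)" using Lf_qp[OF t] t by (simp add: zF_def)
    have e: "eqv t \<in> ambient a b" by (rule eqv_amb[OF t])
    have e2: "eqv t + eqv t \<in> ambient a b" using sgD(2)[OF S e e] .
    have Fe2: "F (eqv t + eqv t) = F (eqv t) + F (eqv t)" by (rule Fadd[OF e e])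
    have Fe3: "F (eqv t + eqv t + eqv t) = F (eqv t) + F (eqv t) + F (eqv t)"
      using Fadd[OF e2 e] Fe2 by simp
    have q0: "fst (qp w t) = (\<lambda>_. 0)" by (simp add: qp_def)
    have q1: "snd (qp w t) j = (if j = t then snd w t else 0)" for j by (simp add: qp_def)
    from ex4[of "snd w t"] show ?thesis
    proof (elim disjE)
      assume h: "snd w t = 0"
      then have "qp w t = 0" by (intro vec_eqI) (simp_all add: q0 q1)
      then show ?thesis using Lq h F0 by simp
    next
      assume h: "snd w t = 1"
      then have "qp w t = eqv t" by (intro vec_eqI) (simp_all add: q0 q1)
      then show ?thesis using Lq h by simp
    next
      assume h: "snd w t = 2"
      then have "qp w t = eqv t + eqv t" by (intro vec_eqI) (simp_all add: q0 q1)
      moreover have "(2::4) * F (eqv t) = F (eqv t) + F (eqv t)" by (rule mult_2)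
      ultimately show ?thesis using Lq h Fe2 by simp
    next
      assume h: "snd w t = 3"
      have "(1::4) + 1 + 1 = 3" by simp
      then have "qp w t = eqv t + eqv t + eqv t" using h by (intro vec_eqI) (simp_all add: q0 q1)
      moreover have "(3::4) * y = y + y + y" for y using ex4[of y] by auto
      ultimately show ?thesis using Lq h Fe3 by simp
    qed
  qed
  define X where "X = (\<Sum>s<a. bp w s)"
  define Y where "Y = (\<Sum>t<b. qp w t)"
  have wXY: "w = X + Y" unfolding X_def Y_def by (rule decomp[OF w])
  have XA: "X \<in> ambient a b" unfolding X_def using sg_sum[OF S, of "{..<a}" "bp w"] bp_amb by simp
  have YA: "Y \<in> ambient a b" unfolding Y_def using sg_sum[OF S, of "{..<b}" "qp w"] qp_amb by simp
  have "Lf a b (zF a b F) w = Lf a b (zF a b F) X + Lf a b (zF a b F) Y"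
    unfolding wXY by (rule Lf_add)
  also have "\<dots> = (\<Sum>s<a. Lf a b (zF a b F) (bp w s)) + (\<Sum>t<b. Lf a b (zF a b F) (qp w t))"
    unfolding X_def Y_def by (simp only: Lf_sum)
  also have "\<dots> = (\<Sum>s<a. F (bp w s)) + (\<Sum>t<b. F (qp w t))"
    using bpe qpe by simp
  also have "\<dots> = F X + F Y"
    unfolding X_def Y_def
    using add_on_sum[OF S F, of "{..<a}" "bp w"] add_on_sum[OF S F, of "{..<b}" "qp w"] bp_amb qp_amb by simp
  also have "\<dots> = F w"
    using Fadd[OF XA YA] wXY by simp
  finally show ?thesis .
qed

context pc begin

lemma sep: assumes v: "v \<in> ambient a b" and nv: "v \<notin> C" and vv: "v + v \<in> C"
  shows "\<exists>z \<in> dual_code a b C. Lf a b z v = 2"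
proof -
  have x4: "nsm 4 v = 0" by (rule tor_vec)
  have addC: "additive_on C (\<lambda>_. 0)" unfolding additive_on_def by simp
  have Q0: "(\<lambda>_. 0) (nsm k v) = of_nat k * (2::4)" if k: "nsm k v \<in> C" for k
  proof -
    have k': "nsm (k mod 4) v \<in> C" using k nsm_mod[OF x4, of k] by simp
    have ok: "(of_nat k :: 4) = of_nat (k mod 4)" by (rule ofnat4_mod)
    from mod4_cases[of k] show ?thesis
    proof (elim disjE)
      assume "k mod 4 = 0" then show ?thesis using ok by simp
    next
      assume "k mod 4 = 1" then show ?thesis using k' nv by simp
    next
      assume "k mod 4 = 2" then show ?thesis using ok by simp
    next
      assume h: "k mod 4 = 3"
      have n3: "nsm 3 v = v + (v + v)" by (simp add: numeral_3_eq_3)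
      have s3: "v + (v + v) \<in> C" using k' h n3 by simp
      have "v + (v + v) - (v + v) \<in> C" by (rule sgD(4)[OF sgC s3 vv])
      then have "v \<in> C" by simp
      then show ?thesis using nv by simp
    qed
  qed
  define S' where "S' = {s + nsm k v | s k. s \<in> C}"
  obtain f' where f': "additive_on S' f'" "\<forall>s\<in>C. f' s = 0" "f' v = 2"
    using ext_step[OF sgC addC x4 Q0] unfolding S'_def by blast
  have S'p: "sg S'" "C \<subseteq> S'" "v \<in> S'" using S'_props[OF sgC x4] unfolding S'_def by auto
  have S'A: "S' \<subseteq> ambient a b"
  proof
    fix y assume "y \<in> S'"
    then obtain s k where "s \<in> C" "y = s + nsm k v" unfolding S'_def by blast
    then show "y \<in> ambient a b" using CA nsm_in[OF sg_ambient v] sgD(2)[OF sg_ambient] by blast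
  qed
  obtain F where F: "additive_on (ambient a b) F" "\<forall>s\<in>S'. F s = f' s"
    using ext_all[OF finite_ambient sg_ambient tor_vec S'p(1) S'A f'(1)] by blast
  have Fv: "F v = 2" using F(2) S'p(3) f'(3) by simp
  have FC: "\<forall>c\<in>C. F c = 0" using F(2) S'p(2) f'(2) by auto
  have "zF a b F \<in> dual_code a b C"
    unfolding dual_code_def using zF_amb zF_Lf[OF F(1)] FC CA by (auto simp: Lf_def)
  moreover have "Lf a b (zF a b F) v = 2" using zF_Lf[OF F(1) v] Fv by simp
  ultimately show ?thesis by blast
qed

end

lemma cshift_pow: assumes M: "0 < M" and v: "\<forall>i\<ge>M. v i = 0"
  shows "(cshift M ^^ m) v i = (if i < M then v ((i + (M*m - m)) mod M) else 0)"
proof (induct m arbitrary: i)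
  case 0 then show ?case using v by simp
next
  case (Suc m)
  obtain M' where MM: "M = Suc M'" using M by (cases M) auto
  have "(cshift M ^^ Suc m) v i = cshift M ((cshift M ^^ m) v) i" by simp
  also have "\<dots> = (if i < M then (cshift M ^^ m) v ((i + M - 1) mod M) else 0)" by (simp add: cshift_def)
  also have "\<dots> = (if i < M then v ((((i + M - 1) mod M) + (M*m - m)) mod M) else 0)"
    using Suc M by simp
  also have e1: "((i + M - 1) mod M + (M*m - m)) mod M = (i + M - 1 + (M*m - m)) mod M"
    by (rule mod_add_left_eq)
  also have e2: "i + M - 1 + (M*m - m) = i + (M * Suc m - Suc m)" unfolding MM by simp
  finally show ?case .
qed

lemma vshift_pow: "(vshift a b ^^ m) x = ((cshift a ^^ m) (fst x), (cshift b ^^ m) (snd x))"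
  by (induct m) (simp_all add: vshift_def)

lemma shift_fst: assumes x: "x \<in> ambient a b" and a: "0 < a" and d: "a dvd m"
  shows "fst ((vshift a b ^^ m) x) = fst x"
proof
  fix s
  have v: "\<forall>i\<ge>a. fst x i = 0" using x by (simp add: ambient_iff)
  show "fst ((vshift a b ^^ m) x) s = fst x s"
  proof (cases "s < a")
    case True
    obtain q where q: "m = a * q" using d by blast
    have "a * m - m = a * ((a - 1) * q)" unfolding q using a by (simp add: algebra_simps diff_mult_distrib2)
    then have "(s + (a*m - m)) mod a = s" using True by simp
    then show ?thesis using True by (simp add: vshift_pow cshift_pow[OF a v])
  next
    case False then show ?thesis using v by (simp add: vshift_pow cshift_pow[OF a v])
  qed
qed

lemma shift_snd: assumes x: "x \<in> ambient a b" and b: "0 < b" and t: "t < b"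
  shows "snd ((vshift a b ^^ m) x) ((t + m) mod b) = snd x t"
proof -
  have v: "\<forall>i\<ge>b. snd x i = 0" using x by (simp add: ambient_iff)
  have m: "m \<le> b * m" using b by simp
  have "(t + m) mod b + (b*m - m) \<equiv> (t + m) mod b + (b*m - m)" .
  have "((t + m) mod b + (b*m - m)) mod b = (t + m + (b*m - m)) mod b" by (simp add: mod_add_left_eq)
  also have "t + m + (b*m - m) = t + b * m" using m by simp
  also have "(t + b*m) mod b = t" using t by simp
  finally have e: "((t + m) mod b + (b*m - m)) mod b = t" .
  show ?thesis using e b by (simp add: vshift_pow cshift_pow[OF b v])
qed

locale cyc = pc +
  fixes r :: nat
  assumes r2: "r > 2" and adef: "a = 2 ^ r - 1" and bdef: "b = 2 ^ (r - 1) * (2 ^ r - 1)"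
    and cyc: "cyclic_code a b (dual_code a b C)"
begin

abbreviation "P \<equiv> (2::nat) ^ (r - 1)"

lemma P_facts: "b = P * a" "a + 1 = 2 * P" "a \<ge> 7" "P \<ge> 4" "0 < a" "0 < b"
proof -
  show "b = P * a" using adef bdef by simp
  have r: "r = Suc (r - 1)" using r2 by simp
  have "(2::nat) ^ r = 2 * P" by (subst r) simp
  moreover have "(2::nat) ^ r \<ge> 2 ^ 3" using r2 by (intro power_increasing) auto
  ultimately show "a + 1 = 2 * P" "a \<ge> 7" using adef by auto
  have "P \<ge> 2 ^ 2" using r2 by (intro power_increasing) auto
  then show "P \<ge> 4" by simp
  then show "0 < a" "0 < b" using \<open>a \<ge> 7\<close> \<open>b = P * a\<close> by auto
qed

abbreviation "D \<equiv> dual_code a b C"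

lemma D_amb: "z \<in> D \<Longrightarrow> z \<in> ambient a b" by (simp add: dual_code_def)

lemma D_shift: "z \<in> D \<Longrightarrow> (vshift a b ^^ m) z \<in> D"
  by (induct m) (use cyc in \<open>auto simp: cyclic_code_def\<close>)

definition pi :: "nat \<Rightarrow> nat" where
  "pi t = (SOME s. s < a \<and> eqv t + eqv t - eb s \<in> C)"

lemma pi: assumes t: "t < b" shows "pi t < a" "eqv t + eqv t - eb (pi t) \<in> C"
proof -
  let ?w = "eqv t + eqv t"
  have wA: "?w \<in> ambient a b" using sgD(2)[OF sg_ambient eqv_amb[OF t] eqv_amb[OF t]] .
  have "?w + ?w = nsm 4 (eqv t)" by (simp add: nsm4 add.assoc)
  then have "?w + ?w \<in> C" using tor_vec sgD(1)[OF sgC] by simp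
  then have "\<exists>s<a. ?w - eb s \<in> C" using ord2[OF wA] double_ne[OF t] by blast
  then have "\<exists>s. s < a \<and> ?w - eb s \<in> C" by blast
  then have "pi t < a \<and> ?w - eb (pi t) \<in> C" unfolding pi_def by (rule someI_ex)
  then show "pi t < a" "?w - eb (pi t) \<in> C" by auto
qed

lemma Lpi: assumes z: "z \<in> D" and t: "t < b"
  shows "snd z t + snd z t = 2 * z2_to_z4 (fst z (pi t))"
proof -
  have "Lf a b z (eqv t + eqv t - eb (pi t)) = 0" by (rule Lf_dual[OF z pi(2)[OF t]])
  then show ?thesis using Lf_diff Lf_add Lf_eqv[OF t] Lf_eb[OF pi(1)[OF t]] by simp
qed


lemma tor2m: "(x::2) - y + (x - y) = 0" using ex2[of x] ex2[of y] by auto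

lemma ebeb0: "eb s + eb s = 0"
  by (rule vec_eqI) (simp_all add: tor2)

lemma pi_block: assumes t: "t < b" shows "pi ((t + a) mod b) = pi t"
proof (rule ccontr)
  define t' where "t' = (t + a) mod b"
  have t': "t' < b" unfolding t'_def using P_facts(6) by simp
  assume "pi ((t + a) mod b) \<noteq> pi t"
  then have ne: "pi t' \<noteq> pi t" unfolding t'_def .
  define v where "v = eb (pi t) - eb (pi t')"
  have vA: "v \<in> ambient a b" unfolding v_def
    using sgD(4)[OF sg_ambient eb_amb[OF pi(1)[OF t]] eb_amb[OF pi(1)[OF t']]] .
  have vC: "v \<notin> C" unfolding v_def using eb_inj[OF pi(1)[OF t] pi(1)[OF t']] ne by metis
  have "v + v = 0" unfolding v_def by (rule vec_eqI) (simp_all only: comp_simps tor2m, simp)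
  then have vv: "v + v \<in> C" using sgD(1)[OF sgC] by simp
  obtain z where z: "z \<in> D" "Lf a b z v = 2" using sep[OF vA vC vv] by blast
  define z' where "z' = (vshift a b ^^ a) z"
  have z'D: "z' \<in> D" unfolding z'_def by (rule D_shift[OF z(1)])
  have f: "fst z' = fst z" unfolding z'_def using shift_fst[OF D_amb[OF z(1)] P_facts(5)] by simp
  have sn: "snd z' t' = snd z t" unfolding z'_def t'_def by (rule shift_snd[OF D_amb[OF z(1)] P_facts(6) t])
  have "snd z t + snd z t = 2 * z2_to_z4 (fst z (pi t'))" using Lpi[OF z'D t'] f sn by simp
  moreover have "snd z t + snd z t = 2 * z2_to_z4 (fst z (pi t))" using Lpi[OF z(1) t] .
  moreover have "Lf a b z v = 2 * z2_to_z4 (fst z (pi t)) - 2 * z2_to_z4 (fst z (pi t'))"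
    unfolding v_def using Lf_diff Lf_eb[OF pi(1)[OF t]] Lf_eb[OF pi(1)[OF t']] by simp
  ultimately have "Lf a b z v = 0" by simp
  then show False using z(2) by simp
qed

lemma pi_blocks: "i < P \<Longrightarrow> l < a \<Longrightarrow> pi (i * a + l) = pi l"
proof (induct i)
  case 0 then show ?case by simp
next
  case (Suc i)
  have "Suc i * a + l < Suc i * a + a" using Suc.prems(2) by simp
  also have "\<dots> = Suc (Suc i) * a" by simp
  also have "\<dots> \<le> P * a" using Suc.prems(1) by (intro mult_le_mono1) simp
  finally have lt: "Suc i * a + l < b" using P_facts(1) by simp
  have "Suc i * a + l = (i * a + l + a) mod b" using lt by simp
  then have "pi (Suc i * a + l) = pi ((i * a + l + a) mod b)" by simp
  also have "\<dots> = pi (i * a + l)" using lt by (intro pi_block) simp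
  also have "\<dots> = pi l" using Suc by simp
  finally show ?case .
qed


definition sgn :: "bool \<Rightarrow> z2z4vec \<Rightarrow> z2z4vec" where "sgn \<beta> x = (if \<beta> then x else - x)"

lemma pi_inj: "inj_on pi {..<a}"
proof (rule inj_onI, rule ccontr)
  fix l1 l2 assume l1: "l1 \<in> {..<a}" and l2: "l2 \<in> {..<a}" and pe: "pi l1 = pi l2" and ne: "l1 \<noteq> l2"
  have l1a: "l1 < a" using l1 by simp
  have ab: "a \<le> b" using P_facts(1,4) by simp
  define s where "s = pi l1"
  define w where "w = (\<lambda>(i, l, \<beta>). sgn \<beta> (eqv (i*a+l)) - eqv l1)"
  define K where "K = {..<P} \<times> {l1, l2} \<times> (UNIV :: bool set)"
  define E2 where "E2 = insert 0 (eb ` {..<a})"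
  have tb: "i * a + l < b" if "i < P" "l < a" for i l
  proof -
    have "i * a + l < i * a + a" using that by simp
    also have "\<dots> = Suc i * a" by simp
    also have "\<dots> \<le> P * a" using that by (intro mult_le_mono1) simp
    finally show ?thesis using P_facts(1) by simp
  qed
  have kprops: "i < P \<and> l < a \<and> pi (i*a+l) = s" if "(i, l, \<beta>) \<in> K" for i l \<beta>
    using that l1 l2 pe pi_blocks unfolding K_def s_def by auto
  have wA: "w k \<in> ambient a b" if "k \<in> K" for k
  proof -
    obtain i l \<beta> where k: "k = (i, l, \<beta>)" by (cases k) auto
    have "i * a + l < b" using kprops[of i l \<beta>] that k tb by auto
    then have "eqv (i*a+l) \<in> ambient a b" by (rule eqv_amb)
    then have "sgn \<beta> (eqv (i*a+l)) \<in> ambient a b" unfolding sgn_def using sgD(3)[OF sg_ambient] by auto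
    then show ?thesis unfolding w_def k using sgD(4)[OF sg_ambient _ eqv_amb] l1a ab by auto
  qed
  have wwC: "w k + w k \<in> C" if "k \<in> K" for k
  proof -
    obtain i l \<beta> where k: "k = (i, l, \<beta>)" by (cases k) auto
    define t where "t = i * a + l"
    have tb': "t < b" and pt: "pi t = s" using kprops[of i l \<beta>] that k tb unfolding t_def by auto
    define X where "X = eqv t + eqv t - eb s"
    define Y where "Y = eqv l1 + eqv l1 - eb s"
    have XC: "X \<in> C" unfolding X_def using pi(2)[OF tb'] pt by simp
    have YC: "Y \<in> C" unfolding Y_def s_def using pi(2) l1a ab by simp
    have ee: "eb s + eb s \<in> C" using ebeb0 sgD(1)[OF sgC] by simp
    show ?thesis
    proof (cases \<beta>)
      case True
      have "w k + w k = X - Y" unfolding k w_def X_def Y_def sgn_def t_def using True by (simp add: algebra_simps)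
      then show ?thesis using sgD(4)[OF sgC XC YC] by simp
    next
      case False
      have "w k + w k = - X - Y - (eb s + eb s)" unfolding k w_def X_def Y_def sgn_def t_def using False by (simp add: algebra_simps)
      moreover have "- X - Y - (eb s + eb s) \<in> C" using sgD(3,4)[OF sgC] XC YC ee by metis
      ultimately show ?thesis by simp
    qed
  qed
  have ex\<rho>: "\<exists>\<rho>. \<rho> \<in> E2 \<and> w k - \<rho> \<in> C" if "k \<in> K" for k
  proof -
    from ord2[OF wA[OF that] wwC[OF that]] show ?thesis
    proof
      assume "w k \<in> C" then show ?thesis unfolding E2_def by (intro exI[of _ 0]) simp
    next
      assume "\<exists>s<a. w k - eb s \<in> C"
      then obtain s where "s < a" "w k - eb s \<in> C" by blast
      then show ?thesis unfolding E2_def by (intro exI[of _ "eb s"]) simp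
    qed
  qed
  define \<phi> where "\<phi> k = (SOME \<rho>. \<rho> \<in> E2 \<and> w k - \<rho> \<in> C)" for k
  have \<phi>: "\<phi> k \<in> E2 \<and> w k - \<phi> k \<in> C" if "k \<in> K" for k
    unfolding \<phi>_def by (rule someI_ex[OF ex\<rho>[OF that]])
  have "inj_on \<phi> K"
  proof (rule inj_onI)
    fix k1 k2 assume k1: "k1 \<in> K" and k2: "k2 \<in> K" and eq: "\<phi> k1 = \<phi> k2"
    obtain i1 m1 \<beta>1 where k1e: "k1 = (i1, m1, \<beta>1)" by (cases k1) auto
    obtain i2 m2 \<beta>2 where k2e: "k2 = (i2, m2, \<beta>2)" by (cases k2) auto
    have p1: "i1 < P" "m1 < a" using kprops k1 k1e by auto
    have p2: "i2 < P" "m2 < a" using kprops k2 k2e by auto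
    define t1 where "t1 = i1 * a + m1"
    define t2 where "t2 = i2 * a + m2"
    have t1b: "t1 < b" and t2b: "t2 < b" using tb p1 p2 unfolding t1_def t2_def by auto
    have "(w k1 - \<phi> k1) - (w k2 - \<phi> k2) \<in> C" using \<phi>[OF k1] \<phi>[OF k2] sgD(4)[OF sgC] by blast
    then have "w k1 - w k2 \<in> C" using eq by simp
    moreover have "w k1 - w k2 = sgn \<beta>1 (eqv t1) - sgn \<beta>2 (eqv t2)"
      unfolding k1e k2e w_def t1_def t2_def by simp
    ultimately have dC: "sgn \<beta>1 (eqv t1) - sgn \<beta>2 (eqv t2) \<in> C" by simp
    have m1: "sgn \<beta>1 (eqv t1) \<in> Eset a b" using Eset_mem(3,4)[OF t1b] unfolding sgn_def by auto
    have m2: "sgn \<beta>2 (eqv t2) \<in> Eset a b" using Eset_mem(3,4)[OF t2b] unfolding sgn_def by auto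
    have se: "sgn \<beta>1 (eqv t1) = sgn \<beta>2 (eqv t2)" by (rule rep_uniq[OF m1 m2 dC])
    then have "snd (sgn \<beta>1 (eqv t1)) t1 = snd (sgn \<beta>2 (eqv t2)) t1" by simp
    then have "t1 = t2 \<and> \<beta>1 = \<beta>2" unfolding sgn_def by (auto split: if_splits)
    moreover have "t1 div a = i1" "t1 mod a = m1" unfolding t1_def using p1 P_facts(5) by simp_all
    moreover have "t2 div a = i2" "t2 mod a = m2" unfolding t2_def using p2 P_facts(5) by simp_all
    ultimately have "i1 = i2 \<and> m1 = m2 \<and> \<beta>1 = \<beta>2" by metis
    then show "k1 = k2" using k1e k2e by simp
  qed
  moreover have "\<phi> ` K \<subseteq> E2" using \<phi> by auto
  moreover have "finite E2" unfolding E2_def by simp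
  ultimately have "card K \<le> card E2" by (rule card_inj_on_le)
  moreover have "card K = P * 2 * 2" unfolding K_def using ne by (simp add: card_cartesian_product)
  moreover have "card E2 \<le> Suc a" unfolding E2_def
  proof -
    have "card (eb ` {..<a}) \<le> a" using card_image_le[of "{..<a}" eb] by simp
    then show "card (insert 0 (eb ` {..<a})) \<le> Suc a" by (simp add: card_insert_if)
  qed
  ultimately show False using P_facts(2,4) by simp
qed

end

lemma even_inv: "finite Q \<Longrightarrow> (\<forall>x\<in>Q. h x \<in> Q \<and> h (h x) = x \<and> h x \<noteq> x) \<Longrightarrow> even (card Q)"
proof (induct "card Q" arbitrary: Q rule: less_induct)
  case less
  show ?case
  proof (cases "Q = {}")
    case True then show ?thesis by simp
  next
    case False
    then obtain x where x: "x \<in> Q" by blast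
    have hx: "h x \<in> Q" "h x \<noteq> x" "h (h x) = x" using less.prems(2) x by auto
    define Q' where "Q' = Q - {x, h x}"
    have fQ': "finite Q'" unfolding Q'_def using less.prems(1) by simp
    have cQ: "card Q = card Q' + 2"
    proof -
      have "card Q' = card Q - card {x, h x}" unfolding Q'_def
        using x hx less.prems(1) by (intro card_Diff_subset) auto
      moreover have "card {x, h x} = 2" using hx by auto
      moreover have "card {x, h x} \<le> card Q" using x hx less.prems(1) by (intro card_mono) auto
      ultimately show ?thesis by simp
    qed
    have cl: "\<forall>y\<in>Q'. h y \<in> Q' \<and> h (h y) = y \<and> h y \<noteq> y"
    proof
      fix y assume y: "y \<in> Q'"
      then have yQ: "y \<in> Q" "y \<noteq> x" "y \<noteq> h x" unfolding Q'_def by auto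
      have p: "h y \<in> Q" "h (h y) = y" "h y \<noteq> y" using less.prems(2) yQ(1) by auto
      have "h y \<noteq> x" using p(2) yQ(3) by auto
      moreover have "h y \<noteq> h x" using p(2) hx(3) yQ(2) by metis
      ultimately show "h y \<in> Q' \<and> h (h y) = y \<and> h y \<noteq> y" unfolding Q'_def using p by auto
    qed
    have "even (card Q')" using less.hyps[of Q'] cQ fQ' cl by simp
    then show ?thesis using cQ by simp
  qed
qed

lemma four_even: "(x::4) \<in> {0, 2} \<longleftrightarrow> x + x = 0" using ex4[of x] by auto

lemma cond4: "(d::4) \<in> {0, 2} \<Longrightarrow>
  (x \<in> {0, 2} \<and> x + d \<in> {0, 2} \<and> x \<noteq> x + d) \<longleftrightarrow> (x + x = 0 \<and> d = 2)"
  using ex4[of x] by auto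

lemma neg2: "- (y::2) = y" using ex2[of y] by auto
lemma tor2p: "(x::2) + y + (x + y) = 0" using ex2[of x] ex2[of y] by auto

context cyc begin

lemma main:
  assumes z: "z \<in> D" and i: "i < P" and j: "j < P"
  shows "even (card {l. l < a \<and> snd z (i*a+l) \<in> {0,2} \<and> snd z (j*a+l) \<in> {0,2} \<and>
                 snd z (i*a+l) \<noteq> snd z (j*a+l)})"
proof -
  have ab: "a \<le> b" using P_facts(1,4) by simp
  have tb: "k * a + l < b" if "k < P" "l < a" for k l
  proof -
    have "k * a + l < k * a + a" using that by simp
    also have "\<dots> = Suc k * a" by simp
    also have "\<dots> \<le> P * a" using that by (intro mult_le_mono1) simp
    finally show ?thesis using P_facts(1) by simp
  qed
  define m where "m = (i + P - j) * a"
  define z' where "z' = (vshift a b ^^ m) z"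
  have z'D: "z' \<in> D" unfolding z'_def by (rule D_shift[OF z])
  have f': "fst z' = fst z" unfolding z'_def m_def using shift_fst[OF D_amb[OF z] P_facts(5)] by simp
  have sB: "snd z' (i*a+l) = snd z (j*a+l)" if l: "l < a" for l
  proof -
    have jj: "(i + P - j) + j = i + P" using j by simp
    have "(i + P - j) * a + j * a = i * a + P * a"
      using arg_cong[OF jj, of "\<lambda>x. x * a"] by (simp only: add_mult_distrib)
    then have e1: "j*a + l + m = (i*a + l) + b" unfolding m_def P_facts(1) by linarith
    have "(j*a + l + m) mod b = i*a + l" unfolding e1 using tb[OF i l] by simp
    then show ?thesis using shift_snd[OF D_amb[OF z] P_facts(6) tb[OF j l], of m] unfolding z'_def by simp
  qed
  define \<delta> where "\<delta> t = snd z' t - snd z t" for t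
  define Ld where "Ld w = Lf a b z' w - Lf a b z w" for w
  have Ld_add: "Ld (v + w) = Ld v + Ld w" for v w unfolding Ld_def by (simp add: Lf_add)
  have Ld_diff: "Ld (v - w) = Ld v - Ld w" for v w unfolding Ld_def by (simp add: Lf_diff)
  have Ld_eqv: "t < b \<Longrightarrow> Ld (eqv t) = \<delta> t" for t unfolding Ld_def \<delta>_def by (simp add: Lf_eqv)
  have Ld0: "Ld w = 0" if w: "w \<in> ambient a b" "w + w \<in> C" for w
  proof -
    from ord2[OF w] show ?thesis
    proof
      assume "w \<in> C" then show ?thesis unfolding Ld_def using Lf_dual[OF z] Lf_dual[OF z'D] by simp
    next
      assume "\<exists>s<a. w - eb s \<in> C"
      then obtain s where s: "s < a" "w - eb s \<in> C" by blast
      have "Ld (w - eb s) = 0" unfolding Ld_def using Lf_dual[OF z s(2)] Lf_dual[OF z'D s(2)] by simp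
      moreover have "Ld (eb s) = 0" unfolding Ld_def using Lf_eb[OF s(1)] f' by simp
      ultimately show ?thesis using Ld_diff[of w "eb s"] by simp
    qed
  qed
  have \<delta>2: "\<delta> t \<in> {0, 2}" if t: "t < b" for t
  proof -
    have "snd z' t + snd z' t = snd z t + snd z t" using Lpi[OF z'D t] Lpi[OF z t] f' by simp
    then have "\<delta> t + \<delta> t = 0" unfolding \<delta>_def by (simp add: algebra_simps)
    then show ?thesis using four_even by simp
  qed
  have piS: "pi ` {..<a} = {..<a}"
    by (rule endo_inj_surj) (use pi(1) ab pi_inj in auto)
  define \<tau> where "\<tau> = the_inv_into {..<a} pi"
  have \<tau>: "\<tau> s < a \<and> pi (\<tau> s) = s" if "s < a" for s
  proof -
    have "s \<in> pi ` {..<a}" using piS that by simp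
    then show ?thesis unfolding \<tau>_def using pi_inj
      by (metis f_the_inv_into_f the_inv_into_into lessThan_iff subset_refl)
  qed
  have \<tau>pi: "\<tau> (pi l) = l" if "l < a" for l unfolding \<tau>_def using pi_inj that by (simp add: the_inv_into_f_f)
  define T where "T s = i * a + \<tau> s" for s
  have T: "T s < b" "pi (T s) = s" if "s < a" for s
    using \<tau>[OF that] tb[OF i] pi_blocks[OF i] unfolding T_def by auto
  define \<mu> where "\<mu> s = 2 * z2_to_z4 (fst z s)" for s
  define \<nu> where "\<nu> s = \<delta> (T s)" for s
  have \<mu>2: "\<mu> s \<in> {0,2}" for s unfolding \<mu>_def by (simp add: z2_to_z4_def)
  have \<nu>2: "\<nu> s \<in> {0,2}" if "s < a" for s unfolding \<nu>_def using \<delta>2 T(1)[OF that] by simp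
  define Q where "Q = {s. s < a \<and> \<mu> s = 0 \<and> \<nu> s = 2}"
  define N where "N = {l. l < a \<and> snd z (i*a+l) \<in> {0,2} \<and> snd z (j*a+l) \<in> {0,2} \<and>
                 snd z (i*a+l) \<noteq> snd z (j*a+l)}"
  have N_eq: "N = {l \<in> {..<a}. pi l \<in> Q}"
  proof -
    have "(snd z (i*a+l) \<in> {0,2} \<and> snd z (j*a+l) \<in> {0,2} \<and> snd z (i*a+l) \<noteq> snd z (j*a+l))
       \<longleftrightarrow> (\<mu> (pi l) = 0 \<and> \<nu> (pi l) = 2)" if l: "l < a" for l
    proof -
      define t where "t = i*a + l"
      have tb': "t < b" unfolding t_def by (rule tb[OF i l])
      have B: "snd z (j*a+l) = snd z t + \<delta> t" unfolding \<delta>_def t_def using sB[OF l] by simp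
      have pt: "pi t = pi l" unfolding t_def by (rule pi_blocks[OF i l])
      have Tt: "T (pi l) = t" unfolding T_def t_def using \<tau>pi[OF l] by simp
      have AA: "snd z t + snd z t = \<mu> (pi l)" unfolding \<mu>_def using Lpi[OF z tb'] pt by simp
      have "(snd z t \<in> {0,2} \<and> snd z t + \<delta> t \<in> {0,2} \<and> snd z t \<noteq> snd z t + \<delta> t)
            \<longleftrightarrow> (snd z t + snd z t = 0 \<and> \<delta> t = 2)" by (rule cond4[OF \<delta>2[OF tb']])
      then show ?thesis using B AA Tt unfolding t_def \<nu>_def by simp
    qed
    moreover have "pi l < a" if "l < a" for l using pi(1) that ab by simp
    ultimately show ?thesis unfolding N_def Q_def by auto
  qed
  have cardNQ: "card N = card Q"
  proof -
    have "pi ` N = Q"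
    proof
      show "pi ` N \<subseteq> Q" unfolding N_eq by auto
      show "Q \<subseteq> pi ` N"
      proof
        fix s assume s: "s \<in> Q"
        then have "s < a" unfolding Q_def by simp
        then have "\<tau> s \<in> N" "pi (\<tau> s) = s" using \<tau> s unfolding N_eq by auto
        then show "s \<in> pi ` N" by (metis image_eqI)
      qed
    qed
    moreover have "inj_on pi N" using pi_inj unfolding N_eq by (rule inj_on_subset) auto
    ultimately show ?thesis using card_image by metis
  qed
  have adex: "\<exists>s''. s'' < a \<and> eb s + eb u - eb s'' \<in> C" if su: "s < a" "u < a" "s \<noteq> u" for s u
  proof -
    define w where "w = eb s + eb u"
    have wA: "w \<in> ambient a b" unfolding w_def using sgD(2)[OF sg_ambient eb_amb[OF su(1)] eb_amb[OF su(2)]] .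
    have "w + w = 0" unfolding w_def by (rule vec_eqI) (simp_all only: comp_simps tor2p, simp)
    then have ww: "w + w \<in> C" using sgD(1)[OF sgC] by simp
    have "w = eb s - eb u" unfolding w_def by (rule vec_eqI) (simp_all only: comp_simps diff_conv_add_uminus neg2, simp)
    then have "w \<notin> C" using eb_inj[OF su(1,2)] su(3) by metis
    then show ?thesis using ord2[OF wA ww] unfolding w_def by blast
  qed
  define ad where "ad s u = (SOME s''. s'' < a \<and> eb s + eb u - eb s'' \<in> C)" for s u
  have ad: "ad s u < a" "eb s + eb u - eb (ad s u) \<in> C" if "s < a" "u < a" "s \<noteq> u" for s u
    using someI_ex[OF adex[OF that]] unfolding ad_def by auto
  have ad_ne: "ad s u \<noteq> s" "ad s u \<noteq> u" if su: "s < a" "u < a" "s \<noteq> u" for s u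
  proof -
    show "ad s u \<noteq> s"
    proof
      assume "ad s u = s"
      then have "eb u \<in> C" using ad(2)[OF su] by simp
      then show False using eb_notC[OF su(2)] by simp
    qed
    show "ad s u \<noteq> u"
    proof
      assume "ad s u = u"
      then have "eb s \<in> C" using ad(2)[OF su] by simp
      then show False using eb_notC[OF su(1)] by simp
    qed
  qed
  have ad_inv: "ad (ad s u) u = s" if su: "s < a" "u < a" "s \<noteq> u" for s u
  proof -
    define s' where "s' = ad s u"
    have s': "s' < a" "s' \<noteq> u" using ad(1)[OF su] ad_ne(2)[OF su] unfolding s'_def by auto
    define e where "e = ad s' u"
    have e: "e < a" "eb s' + eb u - eb e \<in> C" using ad[OF s'(1) su(2) s'(2)] unfolding e_def by auto
    have R: "eb s + eb u - eb s' \<in> C" using ad(2)[OF su] unfolding s'_def .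
    have eq: "(eb s + eb u - eb s') + (eb s' + eb u - eb e) = eb s - eb e + (eb u + eb u)" by (simp add: algebra_simps)
    have eq2: "(eb s + eb u - eb s') + (eb s' + eb u - eb e) = eb s - eb e" by (simp only: eq ebeb0 add_0_right)
    have "eb s - eb e \<in> C" using sgD(2)[OF sgC R e(2)] unfolding eq2 .
    then show ?thesis using eb_inj[OF su(1) e(1)] unfolding e_def s'_def by simp
  qed
  have \<mu>_add: "\<mu> (ad s u) = \<mu> s + \<mu> u" if su: "s < a" "u < a" "s \<noteq> u" for s u
  proof -
    have "Lf a b z (eb s + eb u - eb (ad s u)) = 0" by (rule Lf_dual[OF z ad(2)[OF su]])
    then show ?thesis unfolding \<mu>_def using Lf_add Lf_diff Lf_eb su ad(1)[OF su] by simp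
  qed
  have \<nu>_add: "\<nu> (ad s u) = \<nu> s + \<nu> u" if su: "s < a" "u < a" "s \<noteq> u" for s u
  proof -
    define s' where "s' = ad s u"
    have s'a: "s' < a" unfolding s'_def by (rule ad(1)[OF su])
    define g where "g = eqv (T s') - eqv (T s) - eqv (T u)"
    have gA: "g \<in> ambient a b" unfolding g_def using eqv_amb T(1) s'a su sgD(4)[OF sg_ambient] by metis
    define X1 where "X1 = eqv (T s') + eqv (T s') - eb s'"
    define X2 where "X2 = eqv (T s) + eqv (T s) - eb s"
    define X3 where "X3 = eqv (T u) + eqv (T u) - eb u"
    have X1: "X1 \<in> C" unfolding X1_def using pi(2)[OF T(1)[OF s'a]] T(2)[OF s'a] by simp
    have X2: "X2 \<in> C" unfolding X2_def using pi(2)[OF T(1)[OF su(1)]] T(2)[OF su(1)] by simp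
    have X3: "X3 \<in> C" unfolding X3_def using pi(2)[OF T(1)[OF su(2)]] T(2)[OF su(2)] by simp
    have R: "eb s + eb u - eb s' \<in> C" using ad(2)[OF su] unfolding s'_def .
    have "g + g = X1 - X2 - X3 - (eb s + eb u - eb s')"
      unfolding g_def X1_def X2_def X3_def by (simp add: algebra_simps)
    then have "g + g \<in> C" using X1 X2 X3 R sgD(4)[OF sgC] by metis
    then have "Ld g = 0" by (rule Ld0[OF gA])
    then have "\<delta> (T s') - \<delta> (T s) - \<delta> (T u) = 0"
      unfolding g_def using Ld_diff Ld_eqv T(1) s'a su by simp
    then show ?thesis unfolding \<nu>_def s'_def by (simp add: algebra_simps)
  qed
  \<comment> \<open>pigeonhole: some u with mu u = nu u = 0\<close>
  have "\<not> inj_on (\<lambda>s. (\<mu> s, \<nu> s)) {..<a}"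
  proof
    assume inj: "inj_on (\<lambda>s. (\<mu> s, \<nu> s)) {..<a}"
    have sub: "(\<lambda>s. (\<mu> s, \<nu> s)) ` {..<a} \<subseteq> {0,2} \<times> {0,2}" using \<mu>2 \<nu>2 by auto
    have "card {..<a} \<le> card ({0,2::4} \<times> {0,2::4})"
      by (rule card_inj_on_le[OF inj sub]) simp
    moreover have "card ({0,2::4} \<times> {0,2::4}) \<le> 4"
    proof -
      have "card {0,2::4} \<le> 2" by (rule card_insert_le_m1) simp_all
      then show ?thesis by (simp add: card_cartesian_product)
    qed
    ultimately show False using P_facts(3) by simp
  qed
  then obtain s1 s2 where s12: "s1 < a" "s2 < a" "s1 \<noteq> s2" "\<mu> s1 = \<mu> s2" "\<nu> s1 = \<nu> s2"
    unfolding inj_on_def by auto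
  define u where "u = ad s1 s2"
  have ua: "u < a" unfolding u_def by (rule ad(1)[OF s12(1-3)])
  have x2: "x \<in> {0,2} \<Longrightarrow> x + x = 0" for x :: 4 using four_even by blast
  have \<mu>u: "\<mu> u = 0" unfolding u_def using \<mu>_add[OF s12(1-3)] s12(4) x2[OF \<mu>2] by simp
  have \<nu>u: "\<nu> u = 0" unfolding u_def using \<nu>_add[OF s12(1-3)] s12(5) x2[OF \<nu>2[OF s12(1)]] by simp
  have "even (card Q)"
  proof (rule even_inv[of Q "\<lambda>s. ad s u"])
    show "finite Q" unfolding Q_def by simp
    show "\<forall>s\<in>Q. ad s u \<in> Q \<and> ad (ad s u) u = s \<and> ad s u \<noteq> s"
    proof
      fix s assume s: "s \<in> Q"
      then have sa: "s < a" and ms: "\<mu> s = 0" and ns: "\<nu> s = 2" unfolding Q_def by auto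
      have su: "s \<noteq> u" using ns \<nu>u by auto
      have "ad s u \<in> Q" unfolding Q_def using ad(1)[OF sa ua su] \<mu>_add[OF sa ua su] \<nu>_add[OF sa ua su] ms ns \<mu>u \<nu>u by simp
      then show "ad s u \<in> Q \<and> ad (ad s u) u = s \<and> ad s u \<noteq> s"
        using ad_inv[OF sa ua su] ad_ne(1)[OF sa ua su] by simp
    qed
  qed
  then show ?thesis using cardNQ unfolding N_def by simp
qed

end

theorem proposition3p8:
  fixes r :: nat and \<alpha> \<beta> :: nat and C :: "z2z4vec set" and z :: z2z4vec
    and i j :: nat
  assumes "r > 2"
    and "\<alpha> = 2 ^ r - 1"
    and "\<beta> = 2 ^ (r - 1) * (2 ^ r - 1)"
    and "additive_code \<alpha> \<beta> C"
    and "one_perfect_z2z4 \<alpha> \<beta> C"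
    and "cyclic_code \<alpha> \<beta> (dual_code \<alpha> \<beta> C)"
    and "z \<in> dual_code \<alpha> \<beta> C"
    and "order4 z"
    and "i < 2 ^ (r - 1)" and "j < 2 ^ (r - 1)" and "i \<noteq> j"
  shows "even (card {l. l < \<alpha> \<and>
            snd z (i * \<alpha> + l) \<in> {0, 2} \<and> snd z (j * \<alpha> + l) \<in> {0, 2} \<and>
            snd z (i * \<alpha> + l) \<noteq> snd z (j * \<alpha> + l)})"
proof -
  interpret c: cyc \<alpha> \<beta> C r
    by unfold_locales (use assms in auto)
  show ?thesis using c.main[OF assms(7) assms(9) assms(10)] by simp
qed

end
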